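(* Let $k\in\mathbb{R}$ and let $u\in USC(\bar\Omega)$ be a viscosity subsolution of $$-\Delta_\infty u-\beta|Du|\le k\text{ in }\Omega,\qquad D_\nu u\le0\text{ on }\Gamma_N.$$ Let $r>0$ and $\gamma\in C^2([0,r])$ satisfy $-\gamma''-\beta|\gamma'|=k$ and $\gamma'>0$ in $(0,r)$. For some $x_0\in\bar\Omega$ define $\varphi(x):=\gamma(|x-x_0|)$, and set $\Lambda:=(\partial B(x_0,r)\cap\bar\Omega)\cup(B(x_0,r)\cap\Gamma_D)$. Then $$\max_{\bar B(x_0,r)\cap\bar\Omega}(u-\varphi)=\max_{\Lambda\cup\{x_0\}}(u-\varphi),$$ and if in addition $\gamma'(0)=0$, then $$\max_{\bar B(x_0,r)\cap\bar\Omega}(u-\varphi)=\max_{\Lambda}(u-\varphi).$$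
   Context: Standing setting: $\Omega\subseteq\mathbb{R}^n$ is a bounded, open, connected set with $C^1$ boundary; $\nu$ is the outward unit normal. For some open $A\subseteq\mathbb{R}^n$, $\Gamma_N:=\partial\Omega\cap A$, $\Gamma_D:=\partial\Omega\setminus A\neq\emptyset$. If $\Gamma_N\ne\emptyset$, $\Omega$ is convex. $\beta\in\mathbb{R}$. For $\varphi\in C^2$: $\Delta_\infty^+\varphi(x):=|D\varphi|^{-2}\langle D^2\varphi D\varphi,D\varphi\rangle(x)$ if $D\varphi(x)\ne0$, else $\max_{|v|=1}\langle D^2\varphi(x)v,v\rangle$. Subsolution: $u$ USC on $\bar\Omega$ such that for every $\psi\in C^2(\bar\Omega)$ and $y\in\Omega\cup\Gamma_N$ where $u-\psi$ has a local maximum relative to $\bar\Omega$: $-\Delta^+_\infty\psi(y)-\beta|D\psi(y)|\le k$, or $y\in\Gamma_N$ and $D\psi(y)\cdot\nu(y)\le0$. *)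

theory Defs
  imports "HOL-Analysis.Analysis"
begin

definition usc_on :: "'a::metric_space set \<Rightarrow> ('a \<Rightarrow> real) \<Rightarrow> bool" where
  "usc_on S u \<longleftrightarrow>
     (\<forall>x\<in>S. \<forall>e>0. \<exists>d>0. \<forall>y\<in>S. dist y x < d \<longrightarrow> u y < u x + e)"

definition C2_on_with ::
  "'a::euclidean_space set \<Rightarrow> ('a \<Rightarrow> real) \<Rightarrow> ('a \<Rightarrow> 'a) \<Rightarrow> ('a \<Rightarrow> ('a \<Rightarrow>\<^sub>L 'a)) \<Rightarrow> bool" where
  "C2_on_with U \<psi> G H \<longleftrightarrow>
     open U \<and>
     (\<forall>x\<in>U. (\<psi> has_derivative (\<lambda>h. G x \<bullet> h)) (at x)) \<and>
     (\<forall>x\<in>U. (G has_derivative blinfun_apply (H x)) (at x)) \<and>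
     continuous_on U H"

definition C2_closed_with ::
  "'a::euclidean_space set \<Rightarrow> ('a \<Rightarrow> real) \<Rightarrow> ('a \<Rightarrow> 'a) \<Rightarrow> ('a \<Rightarrow> ('a \<Rightarrow>\<^sub>L 'a)) \<Rightarrow> bool" where
  "C2_closed_with K \<psi> G H \<longleftrightarrow> (\<exists>U. K \<subseteq> U \<and> C2_on_with U \<psi> G H)"

definition inf_lap_plus :: "'a::euclidean_space \<Rightarrow> ('a \<Rightarrow>\<^sub>L 'a) \<Rightarrow> real" where
  "inf_lap_plus p X =
     (if p \<noteq> 0 then (blinfun_apply X p \<bullet> p) / (norm p)\<^sup>2
      else (SUP v\<in>{v. norm v = 1}. blinfun_apply X v \<bullet> v))"

definition C1_boundary_normal :: "'a::euclidean_space set \<Rightarrow> ('a \<Rightarrow> 'a) \<Rightarrow> bool" where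
  "C1_boundary_normal \<Omega> \<nu> \<longleftrightarrow>
     (\<forall>x\<in>frontier \<Omega>. \<exists>U \<rho> G.
        open U \<and> x \<in> U \<and>
        (\<forall>y\<in>U. (\<rho> has_derivative (\<lambda>h. G y \<bullet> h)) (at y)) \<and>
        continuous_on U G \<and> (\<forall>y\<in>U. G y \<noteq> 0) \<and>
        \<Omega> \<inter> U = {y\<in>U. \<rho> y < 0} \<and>
        U - closure \<Omega> = {y\<in>U. \<rho> y > 0} \<and>
        \<nu> x = G x /\<^sub>R norm (G x))"

text \<open>Viscosity subsolution of  -Delta_inf u - beta |Du| <= k in Omega,
  D_nu u <= 0 on Gamma_N = frontier Omega \<inter> A.\<close>
definition visc_subsol ::
  "'a::euclidean_space set \<Rightarrow> 'a set \<Rightarrow> ('a \<Rightarrow> 'a) \<Rightarrow> real \<Rightarrow> real \<Rightarrow> ('a \<Rightarrow> real) \<Rightarrow> bool" where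
  "visc_subsol \<Omega> A \<nu> \<beta> k u \<longleftrightarrow>
     usc_on (closure \<Omega>) u \<and>
     (\<forall>\<psi> G H y. C2_closed_with (closure \<Omega>) \<psi> G H \<longrightarrow>
        y \<in> \<Omega> \<union> (frontier \<Omega> \<inter> A) \<longrightarrow>
        (\<exists>e>0. \<forall>x\<in>closure \<Omega> \<inter> ball y e. u x - \<psi> x \<le> u y - \<psi> y) \<longrightarrow>
        (- inf_lap_plus (G y) (H y) - \<beta> * norm (G y) \<le> k \<or>
         (y \<in> frontier \<Omega> \<inter> A \<and> G y \<bullet> \<nu> y \<le> 0)))"

end

theory Submission
  imports Defs
begin


lemma usc_max:
  fixes f :: "'a::metric_space \<Rightarrow> real"
  assumes K: "compact K" "K \<noteq> {}"
    and usc: "\<forall>x\<in>K. \<forall>e>0. \<exists>d>0. \<forall>y\<in>K. dist y x < d \<longrightarrow> f y < f x + e"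
  shows "\<exists>x\<in>K. \<forall>y\<in>K. f y \<le> f x"
proof (rule ccontr)
  assume "\<not> ?thesis"
  then have "\<forall>x\<in>K. \<exists>y\<in>K. f y > f x" by (auto simp: not_le)
  then obtain g where g: "\<forall>x\<in>K. g x \<in> K \<and> f (g x) > f x" by metis
  have "\<forall>x\<in>K. \<exists>d>0. \<forall>y\<in>K. dist y x < d \<longrightarrow> f y < f (g x)"
  proof
    fix x assume x: "x \<in> K"
    then have "f (g x) - f x > 0" using g by auto
    with usc x obtain d where "d > 0" "\<forall>y\<in>K. dist y x < d \<longrightarrow> f y < f x + (f (g x) - f x)"
      by blast
    then show "\<exists>d>0. \<forall>y\<in>K. dist y x < d \<longrightarrow> f y < f (g x)" by auto
  qed
  then obtain D where D: "\<forall>x\<in>K. D x > 0 \<and> (\<forall>y\<in>K. dist y x < D x \<longrightarrow> f y < f (g x))"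
    by metis
  have "K \<subseteq> (\<Union>x\<in>K. ball x (D x))" using D by force
  then obtain T where T: "T \<subseteq> K" "finite T" "K \<subseteq> (\<Union>x\<in>T. ball x (D x))"
    using compactE_image[OF K(1), of K "\<lambda>x. ball x (D x)"] by blast
  have "T \<noteq> {}" using T K(2) by auto
  obtain xs where xs: "xs \<in> T" "\<forall>x\<in>T. f (g x) \<le> f (g xs)"
  proof -
    have "Max ((\<lambda>x. f (g x)) ` T) \<in> (\<lambda>x. f (g x)) ` T"
      using T(2) \<open>T \<noteq> {}\<close> by (intro Max_in) auto
    then obtain xs where "xs \<in> T" "f (g xs) = Max ((\<lambda>x. f (g x)) ` T)" by auto
    moreover have "\<forall>x\<in>T. f (g x) \<le> Max ((\<lambda>x. f (g x)) ` T)" using T(2) by auto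
    ultimately show ?thesis using that by auto
  qed
  have "g xs \<in> K" using g T xs by auto
  then obtain x where x: "x \<in> T" "g xs \<in> ball x (D x)" using T by auto
  then have "f (g xs) < f (g x)" using D T x \<open>g xs \<in> K\<close> by (auto simp: dist_commute)
  with xs x show False by force
qed



lemma incr_within:
  fixes F F' :: "real \<Rightarrow> real"
  assumes "l \<le> a" "a \<le> b" "b \<le> h"
    and d: "\<forall>x\<in>{l..h}. (F has_real_derivative F' x) (at x within {l..h})"
    and nn: "\<forall>x. a < x \<and> x < b \<longrightarrow> F' x \<ge> 0"
  shows "F a \<le> F b"
proof (rule DERIV_nonneg_imp_increasing_open[OF \<open>a \<le> b\<close>])
  fix x assume x: "a < x" "x < b"
  then have "l < x" "x < h" using assms by auto
  then have "(F has_real_derivative F' x) (at x)"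
  proof -
    have "x \<in> {l..h}" using \<open>l < x\<close> \<open>x < h\<close> by auto
    then have "(F has_real_derivative F' x) (at x within {l..h})" using d by blast
    then show ?thesis using at_within_Icc_at[OF \<open>l < x\<close> \<open>x < h\<close>] by simp
  qed
  then show "\<exists>y. (F has_real_derivative y) (at x) \<and> 0 \<le> y" using nn x by blast
next
  have "continuous_on {l..h} F"
    unfolding continuous_on_eq_continuous_within using d DERIV_continuous by blast
  then show "continuous_on {a..b} F"
    by (rule continuous_on_subset) (use assms in auto)
qed

lemma taylor_up:
  fixes G G1 G2 :: "real \<Rightarrow> real"
  assumes d1: "\<forall>t\<in>{0..r}. (G has_real_derivative G1 t) (at t within {0..r})"
    and d2: "\<forall>t\<in>{0..r}. (G1 has_real_derivative G2 t) (at t within {0..r})"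
    and c2: "continuous_on {0..r} G2" and t0: "t0 \<in> {0..r}" and \<eta>: "\<eta> > 0"
  shows "\<exists>d>0. \<forall>s\<in>{0..r}. \<bar>s - t0\<bar> < d \<longrightarrow>
            G s \<le> G t0 + G1 t0 * (s - t0) + (G2 t0 + \<eta>) / 2 * (s - t0)\<^sup>2"
proof -
  obtain d where d: "d > 0" "\<forall>s\<in>{0..r}. dist s t0 < d \<longrightarrow> dist (G2 s) (G2 t0) < \<eta>"
    using c2 t0 \<eta> unfolding continuous_on_iff by blast
  define F1 where "F1 x = G1 t0 + (G2 t0 + \<eta>) * (x - t0) - G1 x" for x
  define F where "F x = G t0 + G1 t0 * (x - t0) + (G2 t0 + \<eta>) / 2 * (x - t0)\<^sup>2 - G x" for x
  have dF1: "\<forall>x\<in>{0..r}. (F1 has_real_derivative (G2 t0 + \<eta> - G2 x)) (at x within {0..r})"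
  proof
    fix x assume "x \<in> {0..r}"
    then have "(G1 has_real_derivative G2 x) (at x within {0..r})" using d2 by auto
    then show "(F1 has_real_derivative (G2 t0 + \<eta> - G2 x)) (at x within {0..r})"
      unfolding F1_def by (auto intro!: derivative_eq_intros)
  qed
  have dF: "\<forall>x\<in>{0..r}. (F has_real_derivative F1 x) (at x within {0..r})"
  proof
    fix x assume "x \<in> {0..r}"
    then have "(G has_real_derivative G1 x) (at x within {0..r})" using d1 by auto
    then show "(F has_real_derivative F1 x) (at x within {0..r})"
      unfolding F_def F1_def by (auto intro!: derivative_eq_intros simp: field_simps power2_eq_square)
  qed
  have pos: "G2 t0 + \<eta> - G2 x \<ge> 0" if "x \<in> {0..r}" "\<bar>x - t0\<bar> < d" for x
    using d that by (auto simp: dist_real_def)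
  have "G s \<le> G t0 + G1 t0 * (s - t0) + (G2 t0 + \<eta>) / 2 * (s - t0)\<^sup>2"
    if s: "s \<in> {0..r}" "\<bar>s - t0\<bar> < d" for s
  proof (cases "t0 \<le> s")
    case True
    have F1nn: "F1 x \<ge> 0" if "t0 \<le> x" "x \<le> s" for x
    proof -
      have "F1 t0 \<le> F1 x"
        by (rule incr_within[OF _ _ _ dF1]) (use that s t0 True pos in auto)
      then show ?thesis by (simp add: F1_def)
    qed
    have "F t0 \<le> F s"
      by (rule incr_within[OF _ _ _ dF]) (use s t0 True F1nn in auto)
    then show ?thesis by (simp add: F_def)
  next
    case False
    have F1np: "F1 x \<le> 0" if "s \<le> x" "x \<le> t0" for x
    proof -
      have "F1 x \<le> F1 t0"
        by (rule incr_within[OF _ _ _ dF1]) (use that s t0 False pos in auto)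
      then show ?thesis by (simp add: F1_def)
    qed
    have dmF: "\<forall>x\<in>{0..r}. ((\<lambda>x. - F x) has_real_derivative - F1 x) (at x within {0..r})"
      using dF by (auto intro!: derivative_eq_intros)
    have "- F s \<le> - F t0"
      by (rule incr_within[OF _ _ _ dmF]) (use s t0 False F1np in auto)
    then show ?thesis by (simp add: F_def)
  qed
  then show ?thesis using d by blast
qed



lemma radial_arith:
  fixes t0 w q P D G1 G2 \<eta> Gs Gt :: real
  assumes t0: "t0 > 0" and \<eta>: "0 < \<eta>" "\<eta> \<le> 1" and g1: "G1 \<ge> 0"
    and wD: "\<bar>w\<bar> \<le> D" and Dt: "D \<le> t0" and w\<eta>: "2 * D \<le> \<eta> * t0"
    and D3: "3 * D * (\<bar>G2\<bar> + 1) \<le> \<eta> * t0"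
    and P: "P = D\<^sup>2 - w\<^sup>2" and q: "q \<ge> 0" "q * (2 * (t0 + w) + q) = P"
    and tay: "Gs \<le> Gt + G1 * (w + q) + (G2 + \<eta>) / 2 * (w + q)\<^sup>2"
  shows "Gs \<le> Gt + G1 * w + ((G1 * (1 + \<eta>) / t0 + \<eta>) * D\<^sup>2
            + (G2 + 2 * \<eta> - (G1 * (1 + \<eta>) / t0 + \<eta>)) * w\<^sup>2) / 2"
proof -
  have D0: "D \<ge> 0" using wD by auto
  have "w\<^sup>2 \<le> D\<^sup>2" using wD D0 abs_le_square_iff[of w D] by simp
  then have Pnn: "P \<ge> 0" using P by simp
  have PD: "P \<le> D\<^sup>2" using P by simp
  have "\<eta> * t0 \<le> t0" using \<eta> t0 by simp
  then have tw: "t0 + w > 0" using wD w\<eta> t0 by linarith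
  have "q * q \<ge> 0" by simp
  moreover have "q * (2 * (t0 + w) + q) = 2 * q * (t0 + w) + q * q" by (simp add: algebra_simps)
  ultimately have "2 * q * (t0 + w) \<le> P" using q by linarith
  have tw2: "t0 \<le> (1 + \<eta>) * (t0 + w)"
  proof -
    have "\<bar>(1 + \<eta>) * w\<bar> \<le> 2 * D" using wD \<eta> D0
    proof -
      have "\<bar>(1 + \<eta>) * w\<bar> = (1 + \<eta>) * \<bar>w\<bar>" using \<eta> by (simp add: abs_mult)
      also have "\<dots> \<le> 2 * D" using \<eta> wD D0 mult_mono[of "1+\<eta>" 2 "\<bar>w\<bar>" D] by simp
      finally show ?thesis .
    qed
    then have "(1 + \<eta>) * w \<ge> - \<eta> * t0" using w\<eta> by linarith
    then show ?thesis by (simp add: algebra_simps)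
  qed
  have qb: "q \<le> (1 + \<eta>) * P / (2 * t0)"
  proof -
    have "q * (2 * t0) \<le> q * (2 * ((1 + \<eta>) * (t0 + w)))" using tw2 q(1)
      by (simp add: mult_left_mono)
    also have "\<dots> = (1 + \<eta>) * (2 * q * (t0 + w))" by (simp add: algebra_simps)
    also have "\<dots> \<le> (1 + \<eta>) * P" using \<open>2 * q * (t0 + w) \<le> P\<close> \<eta> by (simp add: mult_left_mono)
    finally show ?thesis using t0 by (simp add: field_simps)
  qed
  have qb2: "q \<le> D\<^sup>2 / t0"
  proof -
    have "(1 + \<eta>) * P / (2 * t0) \<le> 2 * P / (2 * t0)" using \<eta> Pnn t0
      by (intro divide_right_mono mult_right_mono) auto
    also have "\<dots> \<le> D\<^sup>2 / t0" using PD t0 by (simp add: divide_right_mono)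
    finally show ?thesis using qb by linarith
  qed
  have qD: "q \<le> D"
  proof -
    have "D\<^sup>2 / t0 \<le> D" using Dt D0 t0 by (simp add: power2_eq_square field_simps mult_left_mono)
    then show ?thesis using qb2 by linarith
  qed
  have cross: "\<bar>q * (2 * w + q)\<bar> \<le> D\<^sup>2 * (3 * D / t0)"
  proof -
    have "\<bar>q * (2 * w + q)\<bar> = q * \<bar>2 * w + q\<bar>" using q(1) by (simp add: abs_mult)
    also have "\<dots> \<le> (D\<^sup>2 / t0) * (3 * D)"
      using qb2 q(1) wD qD by (intro mult_mono) auto
    finally show ?thesis by (simp add: field_simps)
  qed
  have small: "\<bar>G2 + \<eta>\<bar> * (3 * D / t0) \<le> \<eta>"
  proof -
    have "\<bar>G2 + \<eta>\<bar> \<le> \<bar>G2\<bar> + 1" using \<eta> by auto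
    then have "\<bar>G2 + \<eta>\<bar> * (3 * D) \<le> (\<bar>G2\<bar> + 1) * (3 * D)" using D0 by (simp add: mult_right_mono)
    also have "\<dots> \<le> \<eta> * t0" using D3 by (simp add: algebra_simps)
    finally show ?thesis using t0 by (simp add: field_simps)
  qed
  have sq: "(G2 + \<eta>) / 2 * (w + q)\<^sup>2 \<le> (G2 + \<eta>) / 2 * w\<^sup>2 + \<eta> / 2 * D\<^sup>2"
  proof -
    have e: "(w + q)\<^sup>2 = w\<^sup>2 + q * (2 * w + q)" by (simp add: power2_eq_square algebra_simps)
    have "(G2 + \<eta>) * (q * (2 * w + q)) \<le> \<bar>G2 + \<eta>\<bar> * \<bar>q * (2 * w + q)\<bar>"
      by (metis abs_ge_self abs_mult)
    also have "\<dots> \<le> \<bar>G2 + \<eta>\<bar> * (D\<^sup>2 * (3 * D / t0))" using cross by (intro mult_left_mono) auto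
    also have "\<dots> = D\<^sup>2 * (\<bar>G2 + \<eta>\<bar> * (3 * D / t0))" by simp
    also have "\<dots> \<le> D\<^sup>2 * \<eta>" using mult_left_mono[OF small, of "D\<^sup>2"] by simp
    finally have "(G2 + \<eta>) * (q * (2 * w + q)) \<le> D\<^sup>2 * \<eta>" .
    then show ?thesis unfolding e by (simp add: field_simps)
  qed
  have lin: "G1 * (w + q) \<le> G1 * w + G1 * ((1 + \<eta>) * P / (2 * t0))"
    using mult_left_mono[OF qb g1] by (simp add: algebra_simps)
  have "Gs \<le> Gt + G1 * w + G1 * ((1 + \<eta>) * P / (2 * t0)) + (G2 + \<eta>) / 2 * w\<^sup>2 + \<eta> / 2 * D\<^sup>2"
    using tay lin sq by linarith
  also have "\<dots> = Gt + G1 * w + ((G1 * (1 + \<eta>) / t0 + \<eta>) * D\<^sup>2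
            + (G2 + 2 * \<eta> - (G1 * (1 + \<eta>) / t0 + \<eta>)) * w\<^sup>2) / 2"
    using t0 unfolding P by (simp add: field_simps)
  finally show ?thesis .
qed



lemma radial_bound:
  fixes G G1 G2 :: "real \<Rightarrow> real" and x0 y :: "'a::euclidean_space"
  assumes d1: "\<forall>t\<in>{0..r}. (G has_real_derivative G1 t) (at t within {0..r})"
    and d2: "\<forall>t\<in>{0..r}. (G1 has_real_derivative G2 t) (at t within {0..r})"
    and c2: "continuous_on {0..r} G2"
    and y: "0 < norm (y - x0)" "norm (y - x0) < r"
    and g1: "G1 (norm (y - x0)) \<ge> 0" and \<eta>: "0 < \<eta>" "\<eta> \<le> 1"
  defines "t0 \<equiv> norm (y - x0)" and "e \<equiv> (y - x0) /\<^sub>R norm (y - x0)"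
  shows "\<exists>\<epsilon>>0. \<forall>x. norm (x - y) < \<epsilon> \<longrightarrow> G (norm (x - x0)) \<le> G t0 + G1 t0 * (e \<bullet> (x - y))
           + ((G1 t0 * (1 + \<eta>) / t0 + \<eta>) * (norm (x - y))\<^sup>2
              + (G2 t0 + 2 * \<eta> - (G1 t0 * (1 + \<eta>) / t0 + \<eta>)) * (e \<bullet> (x - y))\<^sup>2) / 2"
proof -
  have t0: "t0 > 0" "t0 < r" using y by (auto simp: t0_def)
  have e1: "norm e = 1" using y by (simp add: e_def)
  have ye: "y - x0 = t0 *\<^sub>R e" using y by (simp add: e_def t0_def)
  obtain dT where dT: "dT > 0" "\<forall>s\<in>{0..r}. \<bar>s - t0\<bar> < dT \<longrightarrow>
            G s \<le> G t0 + G1 t0 * (s - t0) + (G2 t0 + \<eta>) / 2 * (s - t0)\<^sup>2"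
    using taylor_up[OF d1 d2 c2, of t0 \<eta>] t0 \<eta> by auto
  define \<epsilon> where "\<epsilon> = min (min dT (r - t0)) (min (t0 * \<eta> / 2) (\<eta> * t0 / (3 * (\<bar>G2 t0\<bar> + 1))))"
  have \<epsilon>: "\<epsilon> > 0" using dT t0 \<eta> by (auto simp: \<epsilon>_def)
  have "G (norm (x - x0)) \<le> G t0 + G1 t0 * (e \<bullet> (x - y))
           + ((G1 t0 * (1 + \<eta>) / t0 + \<eta>) * (norm (x - y))\<^sup>2
              + (G2 t0 + 2 * \<eta> - (G1 t0 * (1 + \<eta>) / t0 + \<eta>)) * (e \<bullet> (x - y))\<^sup>2) / 2"
    if x: "norm (x - y) < \<epsilon>" for x
  proof -
    define D where "D = norm (x - y)"
    define w where "w = e \<bullet> (x - y)"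
    define s where "s = norm (x - x0)"
    define P where "P = D\<^sup>2 - w\<^sup>2"
    define q where "q = s - t0 - w"
    have wD: "\<bar>w\<bar> \<le> D" using Cauchy_Schwarz_ineq2[of e "x - y"] e1 by (simp add: w_def D_def)
    have xx: "x - x0 = t0 *\<^sub>R e + (x - y)" using ye by (simp add: algebra_simps)
    have s2: "s\<^sup>2 = t0\<^sup>2 + 2 * t0 * w + D\<^sup>2"
    proof -
      have "s\<^sup>2 = (t0 *\<^sub>R e + (x - y)) \<bullet> (t0 *\<^sub>R e + (x - y))"
        unfolding s_def xx by (simp add: power2_norm_eq_inner)
      also have "\<dots> = t0\<^sup>2 * (e \<bullet> e) + 2 * t0 * (e \<bullet> (x - y)) + (x - y) \<bullet> (x - y)"
        by (simp add: inner_add_left inner_add_right inner_commute power2_eq_square algebra_simps)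
      also have "\<dots> = t0\<^sup>2 + 2 * t0 * w + D\<^sup>2"
        using e1 by (simp add: w_def D_def power2_norm_eq_inner[symmetric])
      finally show ?thesis .
    qed
    have sge: "s \<ge> t0 + w"
    proof -
      have "e \<bullet> (x - x0) \<le> norm e * norm (x - x0)" by (rule norm_cauchy_schwarz)
      moreover have "e \<bullet> (x - x0) = t0 + w" unfolding xx using e1
        by (simp add: inner_add_right w_def power2_norm_eq_inner[symmetric] dot_square_norm)
      ultimately show ?thesis using e1 by (simp add: s_def)
    qed
    have q0: "q \<ge> 0" using sge by (simp add: q_def)
    have qeq: "q * (2 * (t0 + w) + q) = P"
    proof -
      have "(t0 + w + q)\<^sup>2 = s\<^sup>2" by (simp add: q_def)
      then show ?thesis unfolding s2 P_def by (simp add: power2_eq_square algebra_simps)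
    qed
    have sD: "\<bar>s - t0\<bar> \<le> D"
      unfolding s_def t0_def D_def using norm_triangle_ineq3[of "x - x0" "y - x0"] by simp
    have Ds: "D < \<epsilon>" using x by (simp add: D_def)
    have sr: "s \<in> {0..r}" using sD Ds \<epsilon>_def by (auto simp: s_def)
    have "\<bar>s - t0\<bar> < dT" using sD Ds by (simp add: \<epsilon>_def)
    then have tay: "G s \<le> G t0 + G1 t0 * (w + q) + (G2 t0 + \<eta>) / 2 * (w + q)\<^sup>2"
      using dT sr by (simp add: q_def)
    have w\<eta>: "2 * D \<le> \<eta> * t0" using Ds unfolding \<epsilon>_def by (auto simp: mult.commute)
    have "\<eta> * t0 \<le> t0" using \<eta> t0 by simp
    then have Dt: "D \<le> t0" using w\<eta> D_def by (smt (verit) norm_ge_zero)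
    have D3: "3 * D * (\<bar>G2 t0\<bar> + 1) \<le> \<eta> * t0"
    proof -
      have "D \<le> \<eta> * t0 / (3 * (\<bar>G2 t0\<bar> + 1))" using Ds unfolding \<epsilon>_def by (auto simp: mult.commute)
      then show ?thesis by (simp add: field_simps)
    qed
    show ?thesis
      using radial_arith[OF t0(1) \<eta> g1[folded t0_def] wD Dt w\<eta> D3 P_def q0 qeq tay]
      by (simp add: s_def D_def w_def)
  qed
  then show ?thesis using \<epsilon> by blast
qed



definition Lmat :: "real \<Rightarrow> real \<Rightarrow> 'a::euclidean_space \<Rightarrow> ('a \<Rightarrow>\<^sub>L 'a)" where
  "Lmat a b e = Blinfun (\<lambda>v. a *\<^sub>R v + (b * (e \<bullet> v)) *\<^sub>R e)"

lemma Lmat_bl: "bounded_linear (\<lambda>v::'a::euclidean_space. a *\<^sub>R v + (b * (e \<bullet> v)) *\<^sub>R e)"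
  by (auto intro!: bounded_linear_intros)

lemma Lmat_apply: "blinfun_apply (Lmat a b e) v = a *\<^sub>R v + (b * (e \<bullet> v)) *\<^sub>R e"
  by (simp add: Lmat_def bounded_linear_Blinfun_apply[OF Lmat_bl])

lemma quad_test:
  fixes \<Omega> A :: "'a::euclidean_space set" and \<Phi> :: "'a \<Rightarrow> real"
  assumes sub: "visc_subsol \<Omega> A \<nu> \<beta> k u"
    and y: "y \<in> \<Omega> \<union> (frontier \<Omega> \<inter> A)"
    and lm: "\<exists>e>0. \<forall>x\<in>closure \<Omega> \<inter> ball y e. u x - \<Phi> x \<le> u y - \<Phi> y"
    and ub: "\<exists>\<epsilon>>0. \<forall>x. norm (x - y) < \<epsilon> \<longrightarrow>
              \<Phi> x \<le> \<Phi> y + p \<bullet> (x - y) + (a * (norm (x - y))\<^sup>2 + b * (e \<bullet> (x - y))\<^sup>2) / 2"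
  shows "- inf_lap_plus p (Lmat a b e) - \<beta> * norm p \<le> k \<or> (y \<in> frontier \<Omega> \<inter> A \<and> p \<bullet> \<nu> y \<le> 0)"
proof -
  define \<psi> where "\<psi> x = \<Phi> y + p \<bullet> (x - y) + (a * ((x - y) \<bullet> (x - y)) + b * (e \<bullet> (x - y))\<^sup>2) / 2" for x
  define G where "G x = p + a *\<^sub>R (x - y) + (b * (e \<bullet> (x - y))) *\<^sub>R e" for x
  define H where "H x = Lmat a b e" for x :: 'a
  have dpsi: "(\<psi> has_derivative (\<lambda>h. G x \<bullet> h)) (at x)" for x
    unfolding \<psi>_def G_def
    apply (auto intro!: derivative_eq_intros simp: fun_eq_iff inner_add_left inner_commute algebra_simps power2_eq_square)
    apply (simp add: field_simps)
    done
  have dG: "(G has_derivative blinfun_apply (H x)) (at x)" for x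
    unfolding G_def H_def Lmat_apply[abs_def]
    by (auto intro!: derivative_eq_intros simp: fun_eq_iff algebra_simps)
  have C2: "C2_closed_with (closure \<Omega>) \<psi> G H"
    unfolding C2_closed_with_def C2_on_with_def
    by (rule exI[of _ UNIV]) (auto simp: dpsi dG[unfolded H_def] H_def)
  obtain e1 where e1: "e1 > 0" "\<forall>x\<in>closure \<Omega> \<inter> ball y e1. u x - \<Phi> x \<le> u y - \<Phi> y" using lm by blast
  obtain \<epsilon> where \<epsilon>: "\<epsilon> > 0" "\<forall>x. norm (x - y) < \<epsilon> \<longrightarrow>
              \<Phi> x \<le> \<Phi> y + p \<bullet> (x - y) + (a * (norm (x - y))\<^sup>2 + b * (e \<bullet> (x - y))\<^sup>2) / 2"
    using ub by blast
  have "\<exists>e>0. \<forall>x\<in>closure \<Omega> \<inter> ball y e. u x - \<psi> x \<le> u y - \<psi> y"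
  proof (intro exI[of _ "min e1 \<epsilon>"] conjI ballI)
    show "min e1 \<epsilon> > 0" using e1 \<epsilon> by simp
    fix x assume x: "x \<in> closure \<Omega> \<inter> ball y (min e1 \<epsilon>)"
    then have "norm (x - y) < \<epsilon>" by (simp add: dist_norm norm_minus_commute)
    then have "\<Phi> x \<le> \<psi> x" using \<epsilon> by (simp add: \<psi>_def power2_norm_eq_inner)
    moreover have "u x - \<Phi> x \<le> u y - \<Phi> y" using e1 x by auto
    moreover have "\<psi> y = \<Phi> y" by (simp add: \<psi>_def)
    ultimately show "u x - \<psi> x \<le> u y - \<psi> y" by linarith
  qed
  then have "- inf_lap_plus (G y) (H y) - \<beta> * norm (G y) \<le> k \<or> (y \<in> frontier \<Omega> \<inter> A \<and> G y \<bullet> \<nu> y \<le> 0)"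
    using sub C2 y unfolding visc_subsol_def by blast
  then show ?thesis by (simp add: G_def H_def)
qed

lemma inf_lap_Lmat_pos:
  assumes "p \<noteq> 0"
  shows "inf_lap_plus p (Lmat a b e) = a + b * (e \<bullet> p)\<^sup>2 / (norm p)\<^sup>2"
proof -
  have "blinfun_apply (Lmat a b e) p \<bullet> p = a * (p \<bullet> p) + b * (e \<bullet> p) * (e \<bullet> p)"
    by (simp add: Lmat_apply inner_add_left inner_commute[of e p])
  also have "\<dots> = a * (norm p)\<^sup>2 + b * (e \<bullet> p)\<^sup>2"
    by (simp add: dot_square_norm power2_eq_square)
  finally have "blinfun_apply (Lmat a b e) p \<bullet> p = a * (norm p)\<^sup>2 + b * (e \<bullet> p)\<^sup>2" .
  then show ?thesis using assms by (simp add: inf_lap_plus_def field_simps)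
qed

lemma inf_lap_Lmat_le:
  assumes e: "norm e = 1"
  shows "inf_lap_plus p (Lmat a b e) \<le> max a (a + b)"
proof (cases "p = 0")
  case False
  have c: "(e \<bullet> p)\<^sup>2 / (norm p)\<^sup>2 \<in> {0..1}"
  proof -
    have "\<bar>e \<bullet> p\<bar> \<le> norm p" using Cauchy_Schwarz_ineq2[of e p] e by simp
    then have "(e \<bullet> p)\<^sup>2 \<le> (norm p)\<^sup>2" using abs_le_square_iff[of "e \<bullet> p" "norm p"] by simp
    then show ?thesis using False by auto
  qed
  have "a + b * c \<le> max a (a + b)" if "c \<in> {0..1}" for c
  proof (cases "b \<ge> 0")
    case True then show ?thesis using that mult_left_le[of c b] by auto
  next
    case False then show ?thesis using that by (simp add: mult_nonneg_nonpos2 le_max_iff_disj)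
  qed
  from this[OF c] show ?thesis using inf_lap_Lmat_pos[OF False] by simp
next
  case True
  have "blinfun_apply (Lmat a b e) v \<bullet> v \<le> max a (a + b)" if "norm v = 1" for v
  proof -
    have "\<bar>e \<bullet> v\<bar> \<le> 1" using Cauchy_Schwarz_ineq2[of e v] e that by simp
    then have c: "(e \<bullet> v)\<^sup>2 \<in> {0..1}" by (simp add: abs_le_square_iff abs_square_le_1)
    have "blinfun_apply (Lmat a b e) v \<bullet> v = a * (v \<bullet> v) + b * (e \<bullet> v) * (e \<bullet> v)"
      by (simp add: Lmat_apply inner_add_left inner_commute[of e v])
    also have "\<dots> = a + b * (e \<bullet> v)\<^sup>2"
      using that by (simp add: dot_square_norm power2_eq_square)
    finally have "blinfun_apply (Lmat a b e) v \<bullet> v = a + b * (e \<bullet> v)\<^sup>2" .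
    also have "\<dots> \<le> max a (a + b)"
    proof (cases "b \<ge> 0")
      case True then show ?thesis using c mult_left_le[of "(e \<bullet> v)\<^sup>2" b] by auto
    next
      case False then show ?thesis using c by (simp add: mult_nonneg_nonpos2 le_max_iff_disj)
    qed
    finally show ?thesis .
  qed
  then have "(SUP v\<in>{v. norm v = 1}. blinfun_apply (Lmat a b e) v \<bullet> v) \<le> max a (a + b)"
    using e by (intro cSUP_least) auto
  then show ?thesis using True by (simp add: inf_lap_plus_def)
qed



lemma normal_sign:
  fixes \<Omega> :: "'a::euclidean_space set"
  assumes bdry: "C1_boundary_normal \<Omega> \<nu>" and cvx: "convex \<Omega>" and op: "open \<Omega>"
    and y: "y \<in> frontier \<Omega>"
  shows "\<forall>x\<in>\<Omega>. (x - y) \<bullet> \<nu> y < 0" "\<forall>x\<in>closure \<Omega>. (x - y) \<bullet> \<nu> y \<le> 0"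
proof -
  obtain U \<rho> G where U: "open U" "y \<in> U"
    and d\<rho>: "\<forall>z\<in>U. (\<rho> has_derivative (\<lambda>h. G z \<bullet> h)) (at z)"
    and "continuous_on U G" and G0: "\<forall>z\<in>U. G z \<noteq> 0"
    and in\<Omega>: "\<Omega> \<inter> U = {z\<in>U. \<rho> z < 0}"
    and out\<Omega>: "U - closure \<Omega> = {z\<in>U. \<rho> z > 0}"
    and \<nu>: "\<nu> y = G y /\<^sub>R norm (G y)"
    using bspec[OF bdry[unfolded C1_boundary_normal_def] y]
    apply - apply (elim exE conjE) apply (rule that) by assumption+
  have yc: "y \<in> closure \<Omega>" "y \<notin> \<Omega>" using y op by (auto simp: frontier_def interior_open)
  have \<rho>y: "\<rho> y = 0"
  proof -
    have "\<not> \<rho> y < 0" using in\<Omega> yc U by blast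
    moreover have "\<not> \<rho> y > 0" using out\<Omega> yc U by blast
    ultimately show ?thesis by linarith
  qed
  have \<nu>1: "norm (\<nu> y) = 1" using \<nu> G0 U by simp
  have weak: "(x - y) \<bullet> \<nu> y \<le> 0" if x: "x \<in> \<Omega>" for x
  proof (rule ccontr)
    assume "\<not> ?thesis"
    then have "inverse (norm (G y)) * (G y \<bullet> (x - y)) > 0" using \<nu> by (simp add: inner_commute)
    moreover have "inverse (norm (G y)) > 0" using G0 U by simp
    ultimately have pos: "G y \<bullet> (x - y) > 0" by (simp add: zero_less_mult_iff)
    define f where "f s = \<rho> (y + s *\<^sub>R (x - y))" for s :: real
    have "((\<lambda>s::real. y + s *\<^sub>R (x - y)) has_derivative (\<lambda>s. s *\<^sub>R (x - y))) (at 0)"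
      by (auto intro!: derivative_eq_intros)
    moreover have "(\<rho> has_derivative (\<lambda>h. G y \<bullet> h)) (at (y + (0::real) *\<^sub>R (x - y)))"
      using d\<rho> U by simp
    ultimately have "(f has_derivative (\<lambda>s. G y \<bullet> (s *\<^sub>R (x - y)))) (at 0)"
      unfolding f_def by (rule has_derivative_compose)
    then have "(f has_real_derivative (G y \<bullet> (x - y))) (at 0)"
    proof -
      have "(\<lambda>s. s * (G y \<bullet> (x - y))) = (*) (G y \<bullet> (x - y))" by (auto simp: fun_eq_iff)
      then show ?thesis using that \<open>(f has_derivative _) _\<close> by (simp add: has_field_derivative_def)
    qed
    from has_real_derivative_pos_inc_right[OF this pos]
    obtain d where d: "d > 0" "\<forall>h>0. h < d \<longrightarrow> f 0 < f h" by auto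
    obtain d2 where d2: "d2 > 0" "ball y d2 \<subseteq> U" using U open_contains_ball by blast
    define m where "m = d2 / (norm (x - y) + 1)"
    define h where "h = min (min d m) 1 / 2"
    have m: "m > 0" using d2 by (simp add: add_nonneg_pos m_def)
    then have h: "h > 0" "h < d" "h \<le> 1" "h \<le> m / 2" using d d2 by (auto simp: h_def)
    have "norm (h *\<^sub>R (x - y)) < d2"
    proof -
      have "h * norm (x - y) \<le> m / 2 * norm (x - y)"
        by (rule mult_right_mono) (use h in auto)
      also have "\<dots> < d2"
      proof -
        have n: "norm (x - y) + 1 > 0" by (simp add: add_nonneg_pos)
        have "norm (x - y) < 2 * (norm (x - y) + 1)" by (simp add: add_nonneg_pos)
        then have "d2 * norm (x - y) < d2 * (2 * (norm (x - y) + 1))" using d2 by simp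
        then show ?thesis using n unfolding m_def by (simp add: field_simps)
      qed
      finally show ?thesis using h by simp
    qed
    then have inU: "y + h *\<^sub>R (x - y) \<in> U" using d2 by (auto simp: dist_norm)
    have "y - h *\<^sub>R (y - x) \<in> interior \<Omega>"
      by (rule mem_interior_closure_convex_shrink[OF cvx]) (use x op yc h in \<open>auto simp: interior_open\<close>)
    then have "y + h *\<^sub>R (x - y) \<in> \<Omega>" using op by (simp add: interior_open algebra_simps)
    then have "f h < 0" using in\<Omega> inU by (auto simp: f_def)
    moreover have "f 0 = 0" using \<rho>y by (simp add: f_def)
    ultimately show False using d h by force
  qed
  show strict: "\<forall>x\<in>\<Omega>. (x - y) \<bullet> \<nu> y < 0"
  proof
    fix x assume x: "x \<in> \<Omega>"
    obtain r0 where r0: "r0 > 0" "ball x r0 \<subseteq> \<Omega>" using op x open_contains_ball by blast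
    have "x + (r0 / 2) *\<^sub>R \<nu> y \<in> \<Omega>" using r0 \<nu>1 by (auto simp: dist_norm subset_iff)
    from weak[OF this] have "(x - y) \<bullet> \<nu> y + r0 / 2 \<le> 0"
      using \<nu>1 by (simp add: inner_add_left inner_diff_left dot_square_norm algebra_simps)
    then show "(x - y) \<bullet> \<nu> y < 0" using r0 by linarith
  qed
  show "\<forall>x\<in>closure \<Omega>. (x - y) \<bullet> \<nu> y \<le> 0"
  proof -
    have "closed {x. \<nu> y \<bullet> x \<le> \<nu> y \<bullet> y}" by (rule closed_halfspace_le)
    moreover have "\<Omega> \<subseteq> {x. \<nu> y \<bullet> x \<le> \<nu> y \<bullet> y}"
    proof
      fix x assume "x \<in> \<Omega>"
      then have "(x - y) \<bullet> \<nu> y \<le> 0" by (rule weak)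
      then show "x \<in> {x. \<nu> y \<bullet> x \<le> \<nu> y \<bullet> y}" by (simp add: inner_diff_left inner_commute[of "\<nu> y"])
    qed
    ultimately have "closure \<Omega> \<subseteq> {x. \<nu> y \<bullet> x \<le> \<nu> y \<bullet> y}" by (rule closure_minimal[rotated])
    then show ?thesis by (auto simp: inner_diff_left inner_commute[of "\<nu> y"])
  qed
qed



lemma sq_expand: "(norm (x - z))\<^sup>2 = (norm (y - z))\<^sup>2 + 2 * ((y - z) \<bullet> (x - y)) + (norm (x - y))\<^sup>2"
  for x y z :: "'a::real_inner"
proof -
  have "x - z = (y - z) + (x - y)" by simp
  then have "(norm (x - z))\<^sup>2 = ((y - z) + (x - y)) \<bullet> ((y - z) + (x - y))"
    by (metis power2_norm_eq_inner)
  also have "\<dots> = (norm (y - z))\<^sup>2 + 2 * ((y - z) \<bullet> (x - y)) + (norm (x - y))\<^sup>2"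
    by (simp only: inner_add_left inner_add_right power2_norm_eq_inner inner_commute[of "x - y" "y - z"])
  finally show ?thesis .
qed

lemma core_off:
  fixes \<Omega> A :: "'a::euclidean_space set" and G G1 G2 :: "real \<Rightarrow> real"
  assumes sub: "visc_subsol \<Omega> A \<nu> \<beta> k u"
    and bdry: "C1_boundary_normal \<Omega> \<nu>" and op: "open \<Omega>"
    and GN: "frontier \<Omega> \<inter> A \<noteq> {} \<longrightarrow> convex \<Omega>"
    and x0: "x0 \<in> closure \<Omega>" and z: "z \<in> \<Omega>" and \<tau>: "\<tau> > 0"
    and d1: "\<forall>t\<in>{0..r}. (G has_real_derivative G1 t) (at t within {0..r})"
    and d2: "\<forall>t\<in>{0..r}. (G1 has_real_derivative G2 t) (at t within {0..r})"
    and c2: "continuous_on {0..r} G2"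
    and y: "y \<in> \<Omega> \<union> (frontier \<Omega> \<inter> A)" "0 < norm (y - x0)" "norm (y - x0) < r"
    and g1: "G1 (norm (y - x0)) \<ge> 0" and \<eta>: "0 < \<eta>" "\<eta> \<le> 1"
    and lm: "\<exists>e>0. \<forall>x\<in>closure \<Omega> \<inter> ball y e.
       u x - (G (norm (x - x0)) + \<tau> / 2 * (norm (x - z))\<^sup>2) \<le> u y - (G (norm (y - x0)) + \<tau> / 2 * (norm (y - z))\<^sup>2)"
  defines "t0 \<equiv> norm (y - x0)" and "e \<equiv> (y - x0) /\<^sub>R norm (y - x0)"
  shows "- inf_lap_plus (G1 t0 *\<^sub>R e + \<tau> *\<^sub>R (y - z))
           (Lmat (G1 t0 * (1 + \<eta>) / t0 + \<eta> + \<tau>) (G2 t0 + 2 * \<eta> - (G1 t0 * (1 + \<eta>) / t0 + \<eta>)) e)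
         - \<beta> * norm (G1 t0 *\<^sub>R e + \<tau> *\<^sub>R (y - z)) \<le> k"
proof -
  define \<Phi> where "\<Phi> x = G (norm (x - x0)) + \<tau> / 2 * (norm (x - z))\<^sup>2" for x
  define p where "p = G1 t0 *\<^sub>R e + \<tau> *\<^sub>R (y - z)"
  define a' where "a' = G1 t0 * (1 + \<eta>) / t0 + \<eta>"
  define b where "b = G2 t0 + 2 * \<eta> - a'"
  obtain \<epsilon> where \<epsilon>: "\<epsilon> > 0" "\<forall>x. norm (x - y) < \<epsilon> \<longrightarrow> G (norm (x - x0)) \<le> G t0 + G1 t0 * (e \<bullet> (x - y))
           + (a' * (norm (x - y))\<^sup>2 + b * (e \<bullet> (x - y))\<^sup>2) / 2"
    using radial_bound[OF d1 d2 c2 y(2) y(3) g1 \<eta>] unfolding t0_def e_def a'_def b_def by blast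
  have ub: "\<exists>\<epsilon>>0. \<forall>x. norm (x - y) < \<epsilon> \<longrightarrow>
              \<Phi> x \<le> \<Phi> y + p \<bullet> (x - y) + ((a' + \<tau>) * (norm (x - y))\<^sup>2 + b * (e \<bullet> (x - y))\<^sup>2) / 2"
  proof (intro exI[of _ \<epsilon>] conjI allI impI)
    fix x assume "norm (x - y) < \<epsilon>"
    then have "G (norm (x - x0)) \<le> G t0 + G1 t0 * (e \<bullet> (x - y))
           + (a' * (norm (x - y))\<^sup>2 + b * (e \<bullet> (x - y))\<^sup>2) / 2" using \<epsilon> by blast
    moreover have "\<tau> / 2 * (norm (x - z))\<^sup>2 = \<tau> / 2 * (norm (y - z))\<^sup>2 + \<tau> * ((y - z) \<bullet> (x - y)) + \<tau> / 2 * (norm (x - y))\<^sup>2"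
      by (simp add: sq_expand[of x z y] distrib_left)
    moreover have "p \<bullet> (x - y) = G1 t0 * (e \<bullet> (x - y)) + \<tau> * ((y - z) \<bullet> (x - y))"
      by (simp add: p_def inner_add_left)
    moreover have "((a' + \<tau>) * (norm (x - y))\<^sup>2 + b * (e \<bullet> (x - y))\<^sup>2) / 2
       = (a' * (norm (x - y))\<^sup>2 + b * (e \<bullet> (x - y))\<^sup>2) / 2 + \<tau> / 2 * (norm (x - y))\<^sup>2"
      by (simp add: algebra_simps)
    ultimately show "\<Phi> x \<le> \<Phi> y + p \<bullet> (x - y) + ((a' + \<tau>) * (norm (x - y))\<^sup>2 + b * (e \<bullet> (x - y))\<^sup>2) / 2"
      unfolding \<Phi>_def t0_def by linarith
  qed (use \<epsilon> in auto)
  have lm': "\<exists>e>0. \<forall>x\<in>closure \<Omega> \<inter> ball y e. u x - \<Phi> x \<le> u y - \<Phi> y"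
    using lm by (simp add: \<Phi>_def)
  from quad_test[OF sub y(1) lm' ub]
  have res: "- inf_lap_plus p (Lmat (a' + \<tau>) b e) - \<beta> * norm p \<le> k \<or> (y \<in> frontier \<Omega> \<inter> A \<and> p \<bullet> \<nu> y \<le> 0)" .
  have "\<not> (y \<in> frontier \<Omega> \<inter> A \<and> p \<bullet> \<nu> y \<le> 0)"
  proof
    assume yb: "y \<in> frontier \<Omega> \<inter> A \<and> p \<bullet> \<nu> y \<le> 0"
    then have cvx: "convex \<Omega>" using GN by blast
    have yf: "y \<in> frontier \<Omega>" using yb by blast
    have "(x0 - y) \<bullet> \<nu> y \<le> 0" using normal_sign(2)[OF bdry cvx op yf] x0 by blast
    then have "e \<bullet> \<nu> y \<ge> 0" using y(2) unfolding e_def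
      by (simp add: inner_diff_left divide_inverse)
    then have "G1 t0 * (e \<bullet> \<nu> y) \<ge> 0" using g1 t0_def by simp
    moreover have "(z - y) \<bullet> \<nu> y < 0" using normal_sign(1)[OF bdry cvx op yf] z by blast
    then have "\<tau> * ((y - z) \<bullet> \<nu> y) > 0" using \<tau> by (simp add: inner_diff_left)
    ultimately have "p \<bullet> \<nu> y > 0" by (simp add: p_def inner_add_left)
    then show False using yb by linarith
  qed
  with res have "- inf_lap_plus p (Lmat (a' + \<tau>) b e) - \<beta> * norm p \<le> k" by blast
  then show ?thesis by (simp only: p_def a'_def b_def)
qed

lemma core_at:
  fixes \<Omega> A :: "'a::euclidean_space set" and G G1 G2 :: "real \<Rightarrow> real"
  assumes sub: "visc_subsol \<Omega> A \<nu> \<beta> k u"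
    and bdry: "C1_boundary_normal \<Omega> \<nu>" and op: "open \<Omega>"
    and GN: "frontier \<Omega> \<inter> A \<noteq> {} \<longrightarrow> convex \<Omega>"
    and z: "z \<in> \<Omega>" and \<tau>: "\<tau> > 0" and r: "r > 0"
    and d1: "\<forall>t\<in>{0..r}. (G has_real_derivative G1 t) (at t within {0..r})"
    and d2: "\<forall>t\<in>{0..r}. (G1 has_real_derivative G2 t) (at t within {0..r})"
    and c2: "continuous_on {0..r} G2" and g10: "G1 0 = 0"
    and y: "x0 \<in> \<Omega> \<union> (frontier \<Omega> \<inter> A)" and \<eta>: "0 < \<eta>"
    and lm: "\<exists>e>0. \<forall>x\<in>closure \<Omega> \<inter> ball x0 e.
       u x - (G (norm (x - x0)) + \<tau> / 2 * (norm (x - z))\<^sup>2) \<le> u x0 - (G (norm (x0 - x0)) + \<tau> / 2 * (norm (x0 - z))\<^sup>2)"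
  shows "- inf_lap_plus (\<tau> *\<^sub>R (x0 - z)) (Lmat (G2 0 + \<eta> + \<tau>) 0 e) - \<beta> * norm (\<tau> *\<^sub>R (x0 - z)) \<le> k"
proof -
  define \<Phi> where "\<Phi> x = G (norm (x - x0)) + \<tau> / 2 * (norm (x - z))\<^sup>2" for x
  define p where "p = \<tau> *\<^sub>R (x0 - z)"
  obtain dT where dT: "dT > 0" "\<forall>s\<in>{0..r}. \<bar>s - 0\<bar> < dT \<longrightarrow>
            G s \<le> G 0 + G1 0 * (s - 0) + (G2 0 + \<eta>) / 2 * (s - 0)\<^sup>2"
    using taylor_up[OF d1 d2 c2, of 0 \<eta>] r \<eta> by auto
  have ub: "\<exists>\<epsilon>>0. \<forall>x. norm (x - x0) < \<epsilon> \<longrightarrow>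
              \<Phi> x \<le> \<Phi> x0 + p \<bullet> (x - x0) + ((G2 0 + \<eta> + \<tau>) * (norm (x - x0))\<^sup>2 + 0 * (e \<bullet> (x - x0))\<^sup>2) / 2"
  proof (intro exI[of _ "min dT r"] conjI allI impI)
    fix x assume "norm (x - x0) < min dT r"
    then have "G (norm (x - x0)) \<le> G 0 + (G2 0 + \<eta>) / 2 * (norm (x - x0))\<^sup>2"
      using dT g10 by auto
    moreover have "\<tau> / 2 * (norm (x - z))\<^sup>2 = \<tau> / 2 * (norm (x0 - z))\<^sup>2 + \<tau> * ((x0 - z) \<bullet> (x - x0)) + \<tau> / 2 * (norm (x - x0))\<^sup>2"
      by (simp add: sq_expand[of x z x0] distrib_left)
    moreover have "p \<bullet> (x - x0) = \<tau> * ((x0 - z) \<bullet> (x - x0))" by (simp add: p_def)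
    moreover have "((G2 0 + \<eta> + \<tau>) * (norm (x - x0))\<^sup>2 + 0 * (e \<bullet> (x - x0))\<^sup>2) / 2
       = (G2 0 + \<eta>) / 2 * (norm (x - x0))\<^sup>2 + \<tau> / 2 * (norm (x - x0))\<^sup>2"
      by (simp add: algebra_simps)
    moreover have "G (norm (x0 - x0)) = G 0" by simp
    moreover have "(norm (x0 - x0))\<^sup>2 = 0" by simp
    ultimately show "\<Phi> x \<le> \<Phi> x0 + p \<bullet> (x - x0) + ((G2 0 + \<eta> + \<tau>) * (norm (x - x0))\<^sup>2 + 0 * (e \<bullet> (x - x0))\<^sup>2) / 2"
      unfolding \<Phi>_def by linarith
  qed (use dT r in auto)
  have lm': "\<exists>e>0. \<forall>x\<in>closure \<Omega> \<inter> ball x0 e. u x - \<Phi> x \<le> u x0 - \<Phi> x0"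
    using lm by (simp add: \<Phi>_def)
  from quad_test[OF sub y lm' ub]
  have res: "- inf_lap_plus p (Lmat (G2 0 + \<eta> + \<tau>) 0 e) - \<beta> * norm p \<le> k \<or> (x0 \<in> frontier \<Omega> \<inter> A \<and> p \<bullet> \<nu> x0 \<le> 0)" .
  have "\<not> (x0 \<in> frontier \<Omega> \<inter> A \<and> p \<bullet> \<nu> x0 \<le> 0)"
  proof
    assume yb: "x0 \<in> frontier \<Omega> \<inter> A \<and> p \<bullet> \<nu> x0 \<le> 0"
    then have cvx: "convex \<Omega>" using GN by blast
    have yf: "x0 \<in> frontier \<Omega>" using yb by blast
    have "(z - x0) \<bullet> \<nu> x0 < 0" using normal_sign(1)[OF bdry cvx op yf] z by blast
    then have "p \<bullet> \<nu> x0 > 0" using \<tau> by (simp add: p_def inner_diff_left)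
    then show False using yb by linarith
  qed
  with res have "- inf_lap_plus p (Lmat (G2 0 + \<eta> + \<tau>) 0 e) - \<beta> * norm p \<le> k" by blast
  then show ?thesis by (simp only: p_def)
qed



lemma usc_on_subset: "usc_on S u \<Longrightarrow> T \<subseteq> S \<Longrightarrow> usc_on T u"
  unfolding usc_on_def by blast

lemma usc_on_diff_cont:
  assumes "usc_on K f" "continuous_on K g"
  shows "usc_on K (\<lambda>x. f x - g x)"
  unfolding usc_on_def
proof (intro ballI allI impI)
  fix x e assume x: "x \<in> K" and e: "(e::real) > 0"
  obtain d1 where d1: "d1 > 0" "\<forall>y\<in>K. dist y x < d1 \<longrightarrow> f y < f x + e / 2"
    using assms(1) x e unfolding usc_on_def by (meson half_gt_zero)
  obtain d2 where d2: "d2 > 0" "\<forall>y\<in>K. dist y x < d2 \<longrightarrow> dist (g y) (g x) < e / 2"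
    using assms(2) x e unfolding continuous_on_iff by (meson half_gt_zero)
  show "\<exists>d>0. \<forall>y\<in>K. dist y x < d \<longrightarrow> f y - g y < f x - g x + e"
  proof (intro exI[of _ "min d1 d2"] conjI ballI impI)
    fix y assume "y \<in> K" "dist y x < min d1 d2"
    then have "f y < f x + e / 2" "\<bar>g y - g x\<bar> < e / 2" using d1 d2 by (auto simp: dist_real_def)
    then show "f y - g y < f x - g x + e" by linarith
  qed (use d1 d2 in auto)
qed

lemma perturb_max:
  fixes f \<Psi> :: "'a::metric_space \<Rightarrow> real"
  assumes K: "compact K" and xm: "xm \<in> K" "\<forall>x\<in>K. f x \<le> f xm"
    and usc: "usc_on K f" and c: "continuous_on K \<Psi>" and W: "\<forall>x\<in>K. \<bar>\<Psi> x\<bar> \<le> W"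
  shows "\<exists>y\<in>K. (\<forall>x\<in>K. f x - \<Psi> x \<le> f y - \<Psi> y) \<and> f y \<ge> f xm - 2 * W"
proof -
  have "usc_on K (\<lambda>x. f x - \<Psi> x)" by (rule usc_on_diff_cont[OF usc c])
  then obtain y where y: "y \<in> K" "\<forall>x\<in>K. f x - \<Psi> x \<le> f y - \<Psi> y"
    using usc_max[OF K, of "\<lambda>x. f x - \<Psi> x"] xm unfolding usc_on_def by blast
  have "f xm - \<Psi> xm \<le> f y - \<Psi> y" using y xm by blast
  moreover have "\<bar>\<Psi> xm\<bar> \<le> W" "\<bar>\<Psi> y\<bar> \<le> W" using W xm y by auto
  ultimately have "f y \<ge> f xm - 2 * W" by linarith
  with y show ?thesis by blast
qed

lemma sup_eq_max:
  fixes f :: "'a \<Rightarrow> real"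
  assumes S: "S \<subseteq> K" "S \<noteq> {}" and xm: "xm \<in> K" "\<forall>x\<in>K. f x \<le> f xm"
    and no: "\<And>m. \<forall>x\<in>S. f x \<le> m \<Longrightarrow> m < f xm \<Longrightarrow> False"
  shows "(SUP x\<in>K. f x) = (SUP x\<in>S. f x)"
proof -
  have K: "(SUP x\<in>K. f x) = f xm"
    by (rule cSup_eq_maximum) (use xm in auto)
  have bdd: "bdd_above (f ` S)" using S xm by (auto intro!: bdd_aboveI[of _ "f xm"])
  have le: "(SUP x\<in>S. f x) \<le> f xm" using S xm by (intro cSUP_least) auto
  have up: "\<forall>x\<in>S. f x \<le> (SUP x\<in>S. f x)" using bdd by (auto intro: cSUP_upper)
  have "\<not> (SUP x\<in>S. f x) < f xm" using no[OF up] by blast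
  with le K show ?thesis by linarith
qed

lemma Lambda_ne:
  fixes \<Omega> A :: "'a::euclidean_space set"
  assumes conn: "connected \<Omega>" and GD: "frontier \<Omega> - A \<noteq> {}" and x0: "x0 \<in> closure \<Omega>" and r: "r > 0"
  shows "(sphere x0 r \<inter> closure \<Omega>) \<union> (ball x0 r \<inter> (frontier \<Omega> - A)) \<noteq> {}"
proof -
  obtain q where q: "q \<in> frontier \<Omega>" "q \<notin> A" using GD by blast
  show ?thesis
  proof (cases "norm (q - x0) < r")
    case True
    then have "q \<in> ball x0 r \<inter> (frontier \<Omega> - A)" using q by (auto simp: dist_norm norm_minus_commute)
    then show ?thesis by blast
  next
    case False
    have qc: "q \<in> closure \<Omega>" using q by (simp add: frontier_def)
    have cc: "connected ((\<lambda>x. norm (x - x0)) ` closure \<Omega>)"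
      by (intro connected_continuous_image connected_imp_connected_closure conn)
         (auto intro!: continuous_intros)
    have "0 \<in> (\<lambda>x. norm (x - x0)) ` closure \<Omega>" using x0 by force
    moreover have "norm (q - x0) \<in> (\<lambda>x. norm (x - x0)) ` closure \<Omega>" using qc by blast
    ultimately have "r \<in> (\<lambda>x. norm (x - x0)) ` closure \<Omega>"
      using connectedD_interval[OF cc, of 0 "norm (q - x0)" r] False r by auto
    then obtain x where "x \<in> closure \<Omega>" "norm (x - x0) = r" by blast
    then have "x \<in> sphere x0 r \<inter> closure \<Omega>" by (auto simp: dist_norm norm_minus_commute)
    then show ?thesis by blast
  qed
qed



lemma ode_facts:
  fixes \<gamma> \<gamma>1 \<gamma>2 :: "real \<Rightarrow> real" and \<beta> k r :: real
  assumes r: "r > 0"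
    and g2: "\<forall>t\<in>{0..r}. (\<gamma>1 has_real_derivative \<gamma>2 t) (at t within {0..r})"
    and g2c: "continuous_on {0..r} \<gamma>2"
    and ode: "\<forall>t\<in>{0<..<r}. - \<gamma>2 t - \<beta> * \<bar>\<gamma>1 t\<bar> = k"
    and gpos: "\<forall>t\<in>{0<..<r}. \<gamma>1 t > 0"
    and g10: "\<gamma>1 0 = 0"
  shows "k < 0" "\<gamma>2 0 = - k" "\<exists>c>0. \<forall>t\<in>{0..r}. \<gamma>1 t \<ge> c * t"
proof -
  have c1: "continuous_on {0..r} \<gamma>1"
    unfolding continuous_on_eq_continuous_within using g2 DERIV_continuous by blast
  define F where "F t = - \<gamma>2 t - \<beta> * \<bar>\<gamma>1 t\<bar>" for t
  have cF: "continuous_on {0..r} F" unfolding F_def by (intro continuous_intros c1 g2c)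
  have small: "\<bar>k - F 0\<bar> < e" if e: "e > 0" for e
  proof -
    obtain d where d: "d > 0" "\<forall>t\<in>{0..r}. dist t 0 < d \<longrightarrow> dist (F t) (F 0) < e"
      using cF e r unfolding continuous_on_iff by (metis atLeastAtMost_iff order.refl less_imp_le)
    define t where "t = min d r / 2"
    have t: "t \<in> {0<..<r}" "t \<in> {0..r}" "dist t 0 < d" using d r by (auto simp: t_def dist_real_def)
    then have "F t = k" using ode by (simp add: F_def)
    moreover have "dist (F t) (F 0) < e" using d t by blast
    ultimately show ?thesis by (simp add: dist_real_def)
  qed
  have "F 0 = k"
  proof (rule ccontr)
    assume "F 0 \<noteq> k"
    then have "\<bar>k - F 0\<bar> > 0" by simp
    from small[OF this] show False by simp
  qed
  then show g20: "\<gamma>2 0 = - k" by (simp add: F_def g10)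
  define E where "E t = exp (\<beta> * t) * \<gamma>1 t" for t
  define E' where "E' t = exp (\<beta> * t) * \<beta> * \<gamma>1 t + exp (\<beta> * t) * \<gamma>2 t" for t
  have dE: "\<forall>t\<in>{0..r}. (E has_real_derivative E' t) (at t within {0..r})"
  proof
    fix t assume "t \<in> {0..r}"
    then have "(\<gamma>1 has_real_derivative \<gamma>2 t) (at t within {0..r})" using g2 by blast
    then show "(E has_real_derivative E' t) (at t within {0..r})"
      unfolding E_def E'_def by (auto intro!: derivative_eq_intros simp: algebra_simps)
  qed
  have E'i: "E' t = - k * exp (\<beta> * t)" if "t \<in> {0<..<r}" for t
  proof -
    have eq: "\<gamma>2 t + \<beta> * \<gamma>1 t = - k" using ode gpos that by force
    have "E' t = exp (\<beta> * t) * (\<gamma>2 t + \<beta> * \<gamma>1 t)" unfolding E'_def by (simp add: algebra_simps)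
    also have "\<dots> = - k * exp (\<beta> * t)" unfolding eq by simp
    finally show ?thesis .
  qed
  show kneg: "k < 0"
  proof (rule ccontr)
    assume "\<not> k < 0"
    have dmE: "\<forall>t\<in>{0..r}. ((\<lambda>t. - E t) has_real_derivative - E' t) (at t within {0..r})"
      using dE by (auto intro!: derivative_eq_intros)
    have "- E 0 \<le> - E (r / 2)"
      by (rule incr_within[OF _ _ _ dmE]) (use r E'i \<open>\<not> k < 0\<close> in auto)
    moreover have "E 0 = 0" by (simp add: E_def g10)
    moreover have "E (r / 2) > 0" using gpos r by (simp add: E_def)
    ultimately show False by linarith
  qed
  define c1 where "c1 = - k * exp (- \<bar>\<beta>\<bar> * r)"
  have c1p: "c1 > 0" using kneg by (simp add: c1_def mult_neg_pos)
  have expb: "exp (\<beta> * s) \<ge> exp (- \<bar>\<beta>\<bar> * r)" if "s \<in> {0..r}" for s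
  proof -
    have "\<bar>\<beta> * s\<bar> \<le> \<bar>\<beta>\<bar> * r" using that by (simp add: abs_mult mult_left_mono)
    then show ?thesis by simp
  qed
  show "\<exists>c>0. \<forall>t\<in>{0..r}. \<gamma>1 t \<ge> c * t"
  proof (intro exI[of _ "c1 * exp (- \<bar>\<beta>\<bar> * r)"] conjI ballI)
    show "c1 * exp (- \<bar>\<beta>\<bar> * r) > 0" using c1p by simp
    fix t assume t: "t \<in> {0..r}"
    define H where "H s = E s - c1 * s" for s
    have dH: "\<forall>s\<in>{0..r}. (H has_real_derivative E' s - c1) (at s within {0..r})"
      using dE unfolding H_def by (auto intro!: derivative_eq_intros)
    have "H 0 \<le> H t"
    proof (rule incr_within[OF _ _ _ dH])
      show "\<forall>x. 0 < x \<and> x < t \<longrightarrow> 0 \<le> E' x - c1"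
      proof (intro allI impI)
        fix x assume "0 < x \<and> x < t"
        then have x: "x \<in> {0<..<r}" "x \<in> {0..r}" using t by auto
        have "- k * exp (- \<bar>\<beta>\<bar> * r) \<le> - k * exp (\<beta> * x)"
          using expb[OF x(2)] kneg by (intro mult_left_mono) auto
        then show "0 \<le> E' x - c1" using E'i[OF x(1)] by (simp add: c1_def)
      qed
    qed (use t in auto)
    then have Et: "E t \<ge> c1 * t" by (simp add: H_def E_def g10)
    have "\<gamma>1 t = E t * exp (- (\<beta> * t))" by (simp add: E_def exp_minus field_simps)
    also have "\<dots> \<ge> c1 * t * exp (- \<bar>\<beta>\<bar> * r)"
    proof -
      have "exp (- (\<beta> * t)) \<ge> exp (- \<bar>\<beta>\<bar> * r)"
      proof -
        have "\<beta> * t \<le> \<bar>\<beta>\<bar> * t" using t by (intro mult_right_mono) auto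
        moreover have "\<bar>\<beta>\<bar> * t \<le> \<bar>\<beta>\<bar> * r" using t by (intro mult_left_mono) auto
        ultimately have "- (\<beta> * t) \<ge> - \<bar>\<beta>\<bar> * r" by linarith
        then show ?thesis by simp
      qed
      moreover have "c1 * t \<ge> 0" using c1p t by simp
      ultimately show ?thesis using Et by (meson mult_mono order_trans exp_ge_zero order_refl)
    qed
    finally show "\<gamma>1 t \<ge> c1 * exp (- \<bar>\<beta>\<bar> * r) * t" by (simp add: algebra_simps)
  qed
qed



lemma num_main:
  fixes P EP g1v g2v a b \<tau> V \<delta> K0 \<beta> k \<mu> \<eta> :: real
  assumes P: "P > 0" and EP: "EP\<^sup>2 \<le> P\<^sup>2" "P\<^sup>2 - EP\<^sup>2 \<le> (\<tau> * V)\<^sup>2"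
    and tV: "0 \<le> \<tau> * V" "\<tau> * V \<le> \<delta> * P" and \<delta>: "\<delta> \<ge> 0"
    and Pg: "\<bar>P - g1v\<bar> \<le> \<tau> * V" and bK: "\<bar>b\<bar> \<le> K0"
    and ab: "a + b = g2v + 2 * \<eta> + \<tau>"
    and ineq: "- (a + b * EP\<^sup>2 / P\<^sup>2) - \<beta> * P \<le> k"
    and margin: "- g2v - \<beta> * g1v \<ge> k + \<mu>"
    and small: "2 * \<eta> + \<tau> + \<bar>\<beta>\<bar> * (\<tau> * V) + K0 * \<delta>\<^sup>2 < \<mu>"
  shows False
proof -
  define s where "s = (P\<^sup>2 - EP\<^sup>2) / P\<^sup>2"
  have P2: "P\<^sup>2 > 0" using P by simp
  have s0: "s \<ge> 0" using EP P2 by (simp add: s_def)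
  have "(\<tau> * V)\<^sup>2 \<le> (\<delta> * P)\<^sup>2" using tV by (simp add: power_mono)
  then have "(\<tau> * V)\<^sup>2 \<le> \<delta>\<^sup>2 * P\<^sup>2" by (simp add: power_mult_distrib)
  then have "P\<^sup>2 - EP\<^sup>2 \<le> \<delta>\<^sup>2 * P\<^sup>2" using EP by linarith
  then have s1: "s \<le> \<delta>\<^sup>2" using P2 by (simp add: s_def divide_le_eq)
  have "b * EP\<^sup>2 / P\<^sup>2 = b - b * s" using P2 by (simp add: s_def field_simps)
  moreover have "- (b * s) \<le> K0 * \<delta>\<^sup>2"
  proof -
    have "- b \<le> \<bar>b\<bar>" by simp
    then have "- (b * s) \<le> \<bar>b\<bar> * s" using mult_right_mono[OF _ s0, of "- b" "\<bar>b\<bar>"] by simp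
    also have "\<dots> \<le> K0 * \<delta>\<^sup>2" using bK s0 s1 by (intro mult_mono) auto
    finally show ?thesis .
  qed
  ultimately have "a + b * EP\<^sup>2 / P\<^sup>2 \<le> a + b + K0 * \<delta>\<^sup>2" by linarith
  moreover have "\<beta> * P \<le> \<beta> * g1v + \<bar>\<beta>\<bar> * (\<tau> * V)"
  proof -
    have "\<beta> * P - \<beta> * g1v \<le> \<bar>\<beta> * (P - g1v)\<bar>" by (simp add: right_diff_distrib)
    also have "\<dots> \<le> \<bar>\<beta>\<bar> * (\<tau> * V)" using Pg by (simp add: abs_mult mult_left_mono)
    finally show ?thesis by linarith
  qed
  ultimately show False using ineq margin small ab by linarith
qed



lemma p_facts:
  fixes e v :: "'a::real_inner"
  assumes e: "norm e = 1" and g: "g \<ge> 0" and \<tau>: "\<tau> \<ge> 0"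
  defines "p \<equiv> g *\<^sub>R e + \<tau> *\<^sub>R v"
  shows "(e \<bullet> p)\<^sup>2 \<le> (norm p)\<^sup>2" "(norm p)\<^sup>2 - (e \<bullet> p)\<^sup>2 \<le> (\<tau> * norm v)\<^sup>2"
    "\<bar>norm p - g\<bar> \<le> \<tau> * norm v"
proof -
  have ee: "e \<bullet> e = 1" using e by (simp add: dot_square_norm)
  have "\<bar>e \<bullet> p\<bar> \<le> norm p" using Cauchy_Schwarz_ineq2[of e p] e by simp
  then show "(e \<bullet> p)\<^sup>2 \<le> (norm p)\<^sup>2" using abs_le_square_iff[of "e \<bullet> p" "norm p"] by simp
  have ep: "e \<bullet> p = g + \<tau> * (e \<bullet> v)" using ee by (simp add: p_def inner_add_right)
  have pp: "(norm p)\<^sup>2 = g\<^sup>2 + 2 * g * \<tau> * (e \<bullet> v) + \<tau>\<^sup>2 * (norm v)\<^sup>2"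
    unfolding power2_norm_eq_inner p_def using ee
    by (simp add: inner_add_left inner_add_right inner_commute[of v e] power2_eq_square algebra_simps)
  have "\<bar>e \<bullet> v\<bar> \<le> norm v" using Cauchy_Schwarz_ineq2[of e v] e by simp
  then have "(e \<bullet> v)\<^sup>2 \<le> (norm v)\<^sup>2" using abs_le_square_iff[of "e \<bullet> v" "norm v"] by simp
  then have "\<tau>\<^sup>2 * (e \<bullet> v)\<^sup>2 \<ge> 0" by simp
  then show "(norm p)\<^sup>2 - (e \<bullet> p)\<^sup>2 \<le> (\<tau> * norm v)\<^sup>2"
    unfolding pp ep by (simp add: power2_eq_square algebra_simps)
  have "\<bar>norm p - norm (g *\<^sub>R e)\<bar> \<le> norm (p - g *\<^sub>R e)" by (rule norm_triangle_ineq3)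
  then show "\<bar>norm p - g\<bar> \<le> \<tau> * norm v" using e g \<tau> by (simp add: p_def)
qed

lemma cont_bound:
  fixes g :: "real \<Rightarrow> real"
  assumes "continuous_on {a..b} g"
  shows "\<exists>B>0. \<forall>t\<in>{a..b}. \<bar>g t\<bar> \<le> B"
proof -
  have "bounded (g ` {a..b})" by (rule compact_imp_bounded[OF compact_continuous_image[OF assms compact_Icc]])
  then obtain B where "B > 0" "\<forall>x\<in>g ` {a..b}. norm x \<le> B" by (auto simp: bounded_pos)
  then show ?thesis by auto
qed



lemma locate:
  fixes \<Omega> A :: "'a::euclidean_space set"
  assumes op: "open \<Omega>" and y: "y \<in> cball x0 r \<inter> closure \<Omega>"
    and nL: "y \<notin> (sphere x0 r \<inter> closure \<Omega>) \<union> (ball x0 r \<inter> (frontier \<Omega> - A))"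
  shows "norm (y - x0) < r" "y \<in> \<Omega> \<union> (frontier \<Omega> \<inter> A)"
proof -
  show yr: "norm (y - x0) < r"
  proof (rule ccontr)
    assume "\<not> ?thesis"
    then have "norm (y - x0) = r" using y by (auto simp: dist_norm norm_minus_commute)
    then have "y \<in> sphere x0 r \<inter> closure \<Omega>" using y by (auto simp: dist_norm norm_minus_commute)
    then show False using nL by blast
  qed
  show "y \<in> \<Omega> \<union> (frontier \<Omega> \<inter> A)"
  proof (cases "y \<in> \<Omega>")
    case False
    then have "y \<in> frontier \<Omega>" using y op by (auto simp: frontier_def interior_open)
    moreover have "y \<in> ball x0 r" using yr by (auto simp: dist_norm norm_minus_commute)
    ultimately have "y \<in> A" using nL by blast
    then show ?thesis using \<open>y \<in> frontier \<Omega>\<close> by blast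
  qed auto
qed

lemma loc_max:
  fixes F :: "'a::euclidean_space \<Rightarrow> real"
  assumes y: "y \<in> cball x0 r \<inter> closure \<Omega>" "norm (y - x0) < r"
    and mx: "\<forall>x\<in>cball x0 r \<inter> closure \<Omega>. F x \<le> F y"
  shows "\<exists>e>0. \<forall>x\<in>closure \<Omega> \<inter> ball y e. F x \<le> F y"
proof (intro exI[of _ "r - norm (y - x0)"] conjI ballI)
  show "r - norm (y - x0) > 0" using y by simp
  fix x assume x: "x \<in> closure \<Omega> \<inter> ball y (r - norm (y - x0))"
  have "norm (x - x0) \<le> norm (x - y) + norm (y - x0)" using norm_triangle_ineq[of "x - y" "y - x0"] by simp
  moreover have "norm (x - y) < r - norm (y - x0)" using x by (simp add: dist_norm norm_minus_commute)
  ultimately have "x \<in> cball x0 r" by (simp add: dist_norm norm_minus_commute)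
  then show "F x \<le> F y" using x mx by blast
qed



lemma claim1:
  fixes \<Omega> A :: "'a::euclidean_space set" and \<nu> :: "'a \<Rightarrow> 'a"
    and \<beta> k r :: real and u :: "'a \<Rightarrow> real" and x0 :: 'a
    and \<gamma> \<gamma>1 \<gamma>2 :: "real \<Rightarrow> real"
  assumes bd: "bounded \<Omega>" and op: "open \<Omega>"
    and bdry: "C1_boundary_normal \<Omega> \<nu>"
    and GD: "frontier \<Omega> - A \<noteq> {}"
    and GN: "frontier \<Omega> \<inter> A \<noteq> {} \<longrightarrow> convex \<Omega>"
    and sub: "visc_subsol \<Omega> A \<nu> \<beta> k u"
    and r: "r > 0"
    and g1: "\<forall>t\<in>{0..r}. (\<gamma> has_real_derivative \<gamma>1 t) (at t within {0..r})"
    and g2: "\<forall>t\<in>{0..r}. (\<gamma>1 has_real_derivative \<gamma>2 t) (at t within {0..r})"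
    and g2c: "continuous_on {0..r} \<gamma>2"
    and ode: "\<forall>t\<in>{0<..<r}. - \<gamma>2 t - \<beta> * \<bar>\<gamma>1 t\<bar> = k"
    and gpos: "\<forall>t\<in>{0<..<r}. \<gamma>1 t > 0"
    and x0: "x0 \<in> closure \<Omega>"
  shows "(SUP x\<in>cball x0 r \<inter> closure \<Omega>. u x - \<gamma> (norm (x - x0)))
       = (SUP x\<in>((sphere x0 r \<inter> closure \<Omega>) \<union> (ball x0 r \<inter> (frontier \<Omega> - A))) \<union> {x0}. u x - \<gamma> (norm (x - x0)))"
proof -
  define K where "K = cball x0 r \<inter> closure \<Omega>"
  define \<Lambda> where "\<Lambda> = (sphere x0 r \<inter> closure \<Omega>) \<union> (ball x0 r \<inter> (frontier \<Omega> - A))"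
  define f where "f x = u x - \<gamma> (norm (x - x0))" for x
  have Kc: "compact K" unfolding K_def by (intro compact_Int_closed compact_cball closed_closure)
  have x0K: "x0 \<in> K" using x0 r by (simp add: K_def)
  have c\<gamma>: "continuous_on {0..r} \<gamma>"
    unfolding continuous_on_eq_continuous_within using g1 DERIV_continuous by blast
  have c\<gamma>1: "continuous_on {0..r} \<gamma>1"
    unfolding continuous_on_eq_continuous_within using g2 DERIV_continuous by blast
  have normK: "\<forall>x\<in>K. norm (x - x0) \<in> {0..r}" by (auto simp: K_def dist_norm norm_minus_commute)
  have c\<phi>: "continuous_on K (\<lambda>x. \<gamma> (norm (x - x0)))"
    by (rule continuous_on_compose2[OF c\<gamma>]) (use normK in \<open>auto intro!: continuous_intros\<close>)
  have uscu: "usc_on K u" using sub unfolding visc_subsol_def by (auto intro: usc_on_subset simp: K_def)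
  have uscf: "usc_on K f" unfolding f_def by (rule usc_on_diff_cont[OF uscu c\<phi>])
  obtain xm where xm: "xm \<in> K" "\<forall>x\<in>K. f x \<le> f xm"
    using usc_max[OF Kc, of f] x0K uscf unfolding usc_on_def by blast
  have SK: "\<Lambda> \<union> {x0} \<subseteq> K" using x0K by (auto simp: \<Lambda>_def K_def frontier_def dist_norm)
  have "(SUP x\<in>K. f x) = (SUP x\<in>\<Lambda> \<union> {x0}. f x)"
  proof (rule sup_eq_max[OF SK _ xm])
    show "\<Lambda> \<union> {x0} \<noteq> {}" by simp
    fix m assume mS: "\<forall>x\<in>\<Lambda> \<union> {x0}. f x \<le> m" and mM: "m < f xm"
    define \<Delta> where "\<Delta> = f xm - m"
    have \<Delta>: "\<Delta> > 0" using mM by (simp add: \<Delta>_def)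
    obtain \<rho>0 where \<rho>0: "\<rho>0 > 0" "\<forall>x\<in>K. dist x x0 < \<rho>0 \<longrightarrow> f x < f x0 + \<Delta> / 2"
      using uscf x0K \<Delta> unfolding usc_on_def by (meson half_gt_zero)
    have fx0: "f x0 \<le> m" using mS by simp
    have "\<Omega> \<noteq> {}" using GD by auto
    then obtain z where z: "z \<in> \<Omega>" by blast
    obtain B0 where B0: "B0 > 0" "\<forall>x\<in>closure \<Omega>. norm x \<le> B0"
      using bounded_closure[OF bd] unfolding bounded_pos by blast
    define V where "V = B0 + norm z + 1"
    have V: "V > 0" "\<forall>x\<in>closure \<Omega>. norm (x - z) \<le> V"
    proof -
      show "V > 0" using B0 by (simp add: V_def add_pos_nonneg)
      show "\<forall>x\<in>closure \<Omega>. norm (x - z) \<le> V"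
      proof
        fix x assume "x \<in> closure \<Omega>"
        then have "norm x \<le> B0" using B0 by blast
        moreover have "norm (x - z) \<le> norm x + norm z" by (rule norm_triangle_ineq4)
        ultimately show "norm (x - z) \<le> V" by (simp add: V_def)
      qed
    qed
    obtain G1m where G1m: "G1m > 0" "\<forall>t\<in>{0..r}. \<bar>\<gamma>1 t\<bar> \<le> G1m" using cont_bound[OF c\<gamma>1] by blast
    obtain G2m where G2m: "G2m > 0" "\<forall>t\<in>{0..r}. \<bar>\<gamma>2 t\<bar> \<le> G2m" using cont_bound[OF g2c] by blast
    define C where "C = \<bar>\<beta>\<bar> + 1"
    define c where "c = C * exp (- C * r)"
    have C: "C \<ge> 1" "C - \<beta> \<ge> 1" by (auto simp: C_def)
    have c: "c > 0" using C by (simp add: c_def)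
    define K0 where "K0 = 2 * (G1m + C) / \<rho>0 + G2m + C\<^sup>2 + 3"
    have K0: "K0 > 0" using G1m G2m C \<rho>0 by (simp add: K0_def add_pos_nonneg)
    define B where "B = c * (1 + \<bar>\<beta>\<bar> * V) / (2 * V) + K0"
    have B: "B > 0" using c V K0 by (simp add: B_def add_nonneg_pos)
    define \<delta> where "\<delta> = min (min 1 (1 / (c + 1))) (min (c / (2 * B)) (\<Delta> / (8 * (1 + c * V))))"
    have \<delta>: "\<delta> > 0" "\<delta> \<le> 1" "\<delta> \<le> 1 / (c + 1)" "\<delta> \<le> c / (2 * B)" "\<delta> \<le> \<Delta> / (8 * (1 + c * V))"
    proof -
      have "1 / (c + 1) > 0" "c / (2 * B) > 0" "\<Delta> / (8 * (1 + c * V)) > 0" using c B \<Delta> V by (auto simp: add_pos_pos)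
      then show "\<delta> > 0" by (simp add: \<delta>_def)
      show "\<delta> \<le> 1" "\<delta> \<le> 1 / (c + 1)" "\<delta> \<le> c / (2 * B)" "\<delta> \<le> \<Delta> / (8 * (1 + c * V))"
        unfolding \<delta>_def by (simp_all only: min_le_iff_disj) auto
    qed
    define \<tau> where "\<tau> = \<delta>\<^sup>2 * c / (2 * V)"
    define \<eta> where "\<eta> = \<delta> * c / 8"
    have \<tau>: "\<tau> > 0" "\<tau> * V = \<delta>\<^sup>2 * c / 2" using \<delta> c V by (auto simp: \<tau>_def)
    have \<eta>: "\<eta> > 0" "\<eta> \<le> 1"
    proof -
      show "\<eta> > 0" using \<delta> c by (simp add: \<eta>_def)
      have "\<delta> * c \<le> 1 / (c + 1) * c" using \<delta> c by (intro mult_right_mono) auto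
      also have "\<dots> \<le> 1" using c by (simp add: field_simps)
      finally show "\<eta> \<le> 1" by (simp add: \<eta>_def)
    qed
    define \<Gamma> where "\<Gamma> t = \<gamma> t + \<delta> * (1 - exp (- C * t))" for t
    define \<Gamma>1 where "\<Gamma>1 t = \<gamma>1 t + \<delta> * (C * exp (- C * t))" for t
    define \<Gamma>2 where "\<Gamma>2 t = \<gamma>2 t + \<delta> * (- C\<^sup>2 * exp (- C * t))" for t
    have d\<Gamma>: "\<forall>t\<in>{0..r}. (\<Gamma> has_real_derivative \<Gamma>1 t) (at t within {0..r})"
    proof
      fix t assume "t \<in> {0..r}"
      then have "(\<gamma> has_real_derivative \<gamma>1 t) (at t within {0..r})" using g1 by blast
      then show "(\<Gamma> has_real_derivative \<Gamma>1 t) (at t within {0..r})"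
        unfolding \<Gamma>_def \<Gamma>1_def by (auto intro!: derivative_eq_intros simp: algebra_simps)
    qed
    have d\<Gamma>1: "\<forall>t\<in>{0..r}. (\<Gamma>1 has_real_derivative \<Gamma>2 t) (at t within {0..r})"
    proof
      fix t assume "t \<in> {0..r}"
      then have "(\<gamma>1 has_real_derivative \<gamma>2 t) (at t within {0..r})" using g2 by blast
      then show "(\<Gamma>1 has_real_derivative \<Gamma>2 t) (at t within {0..r})"
        unfolding \<Gamma>1_def \<Gamma>2_def by (auto intro!: derivative_eq_intros simp: algebra_simps power2_eq_square)
    qed
    have c\<Gamma>2: "continuous_on {0..r} \<Gamma>2" unfolding \<Gamma>2_def by (intro continuous_intros g2c)
    define \<Psi> where "\<Psi> x = \<delta> * (1 - exp (- C * norm (x - x0))) + \<tau> / 2 * (norm (x - z))\<^sup>2" for x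
    have c\<Psi>: "continuous_on K \<Psi>" unfolding \<Psi>_def by (intro continuous_intros)
    define W where "W = \<delta> + \<tau> * V\<^sup>2 / 2"
    have \<Psi>W: "\<forall>x\<in>K. \<bar>\<Psi> x\<bar> \<le> W"
    proof
      fix x assume x: "x \<in> K"
      have e1: "exp (- C * norm (x - x0)) \<le> 1" using C by simp
      have e0: "exp (- C * norm (x - x0)) > 0" by simp
      have "norm (x - z) \<le> V" using V x by (auto simp: K_def)
      then have n2: "(norm (x - z))\<^sup>2 \<le> V\<^sup>2" by (simp add: power_mono)
      have "\<delta> * (1 - exp (- C * norm (x - x0))) \<le> \<delta>" using \<delta> e0 by (simp add: mult_left_le)
      moreover have "\<delta> * (1 - exp (- C * norm (x - x0))) \<ge> 0" using \<delta> e1 by simp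
      moreover have "\<tau> / 2 * (norm (x - z))\<^sup>2 \<le> \<tau> / 2 * V\<^sup>2" using n2 \<tau> by (simp add: mult_left_mono)
      moreover have "\<tau> / 2 * (norm (x - z))\<^sup>2 \<ge> 0" using \<tau> by simp
      ultimately show "\<bar>\<Psi> x\<bar> \<le> W" by (simp add: \<Psi>_def W_def)
    qed
    have W: "2 * W \<le> \<Delta> / 4"
    proof -
      have "\<tau> * V\<^sup>2 / 2 = \<delta>\<^sup>2 * c * V / 4" using \<tau> by (simp add: power2_eq_square field_simps)
      also have "\<dots> \<le> \<delta> * c * V" using \<delta> c V
        by (simp add: power2_eq_square mult_le_cancel_right1 mult_left_le)
      finally have "W \<le> \<delta> * (1 + c * V)" by (simp add: W_def algebra_simps)
      also have "\<dots> \<le> \<Delta> / 8"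
      proof -
        obtain X where X: "X = 1 + c * V" by blast
        have Xp: "X > 0" using c V X by (simp add: add_pos_pos)
        have "\<delta> * X \<le> \<Delta> / (8 * X) * X" using \<delta> Xp X by (intro mult_right_mono) auto
        also have "\<dots> = \<Delta> / 8" using Xp by simp
        finally show ?thesis using X by simp
      qed
      finally show ?thesis by simp
    qed
    obtain y where y: "y \<in> K" "\<forall>x\<in>K. f x - \<Psi> x \<le> f y - \<Psi> y" "f y \<ge> f xm - 2 * W"
      using perturb_max[OF Kc xm uscf c\<Psi> \<Psi>W] by blast
    have fy: "f y > m + \<Delta> / 2" using y(3) W \<Delta> unfolding \<Delta>_def by argo
    have ynL: "y \<notin> \<Lambda>"
    proof
      assume "y \<in> \<Lambda>"
      then have "f y \<le> m" using mS by blast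
      then show False using fy \<Delta> by argo
    qed
    have yr: "norm (y - x0) < r" and y\<Omega>: "y \<in> \<Omega> \<union> (frontier \<Omega> \<inter> A)"
      using locate[OF op y(1)[unfolded K_def] ynL[unfolded \<Lambda>_def]] by auto
    have y\<rho>: "norm (y - x0) \<ge> \<rho>0"
    proof (rule ccontr)
      assume "\<not> ?thesis"
      then have "f y < f x0 + \<Delta> / 2" using \<rho>0 y(1) by (simp add: dist_norm)
      then show False using fx0 fy by linarith
    qed
    define t0 where "t0 = norm (y - x0)"
    define e where "e = (y - x0) /\<^sub>R norm (y - x0)"
    define v where "v = y - z"
    define p where "p = \<Gamma>1 t0 *\<^sub>R e + \<tau> *\<^sub>R v"
    define a where "a = \<Gamma>1 t0 * (1 + \<eta>) / t0 + \<eta> + \<tau>"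
    define b where "b = \<Gamma>2 t0 + 2 * \<eta> - (\<Gamma>1 t0 * (1 + \<eta>) / t0 + \<eta>)"
    have t0: "0 < t0" "t0 < r" "t0 \<ge> \<rho>0" using y\<rho> \<rho>0 yr by (auto simp: t0_def)
    have t0i: "t0 \<in> {0<..<r}" "t0 \<in> {0..r}" using t0 by auto
    have E: "exp (- C * t0) \<ge> exp (- C * r)" using t0 C by simp
    have g1p: "\<gamma>1 t0 > 0" using gpos t0i by blast
    have \<Gamma>1lb: "\<Gamma>1 t0 \<ge> \<delta> * c"
    proof -
      have "\<delta> * c \<le> \<delta> * (C * exp (- C * t0))" unfolding c_def using E \<delta> C by (intro mult_left_mono) auto
      then show ?thesis using g1p by (simp add: \<Gamma>1_def)
    qed
    have \<delta>c: "\<delta> * c > 0" using \<delta> c by simp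
    have \<Gamma>1t: "\<Gamma>1 t0 \<ge> 0" using \<Gamma>1lb \<delta>c by linarith
    have lm: "\<exists>e>0. \<forall>x\<in>closure \<Omega> \<inter> ball y e.
       u x - (\<Gamma> (norm (x - x0)) + \<tau> / 2 * (norm (x - z))\<^sup>2) \<le> u y - (\<Gamma> (norm (y - x0)) + \<tau> / 2 * (norm (y - z))\<^sup>2)"
    proof -
      have eq: "f x - \<Psi> x = u x - (\<Gamma> (norm (x - x0)) + \<tau> / 2 * (norm (x - z))\<^sup>2)" for x
        by (simp add: f_def \<Psi>_def \<Gamma>_def algebra_simps)
      show ?thesis using loc_max[of y x0 r \<Omega> "\<lambda>x. f x - \<Psi> x"] y(1,2) yr unfolding K_def eq by blast
    qed
    have core: "- inf_lap_plus p (Lmat a b e) - \<beta> * norm p \<le> k"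
      using core_off[OF sub bdry op GN x0 z \<tau>(1) d\<Gamma> d\<Gamma>1 c\<Gamma>2 y\<Omega> t0(1)[unfolded t0_def] yr
          \<Gamma>1t[unfolded t0_def] \<eta> lm]
      unfolding p_def a_def b_def t0_def e_def v_def by simp
    have e1: "norm e = 1" using t0 by (simp add: e_def t0_def)
    note pf = p_facts[OF e1 \<Gamma>1t less_imp_le[OF \<tau>(1)], of v, folded p_def]
    have vV: "norm v \<le> V" using V y(1) by (auto simp: v_def K_def)
    have tv: "\<tau> * norm v \<le> \<tau> * V" using vV \<tau> by (simp add: mult_left_mono)
    have tv0: "\<tau> * norm v \<ge> 0" using \<tau> by simp
    have Plb: "norm p \<ge> \<delta> * c / 2"
    proof -
      have "\<delta>\<^sup>2 * c / 2 \<le> \<delta> * c / 2" using \<delta> c by (simp add: power2_eq_square mult_le_cancel_right1 mult_left_le)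
      then show ?thesis using pf(3) \<Gamma>1lb tv \<tau>(2) by linarith
    qed
    have P: "norm p > 0" using Plb \<delta>c by linarith
    have tvP: "\<tau> * norm v \<le> \<delta> * norm p"
    proof -
      have "\<delta> * (\<delta> * c / 2) \<le> \<delta> * norm p" using Plb \<delta> by (intro mult_left_mono) auto
      then show ?thesis using tv \<tau>(2) by (simp add: power2_eq_square)
    qed
    have bK: "\<bar>b\<bar> \<le> K0"
    proof -
      have "\<bar>\<Gamma>2 t0\<bar> \<le> G2m + C\<^sup>2"
      proof -
        have "\<bar>\<delta> * (- C\<^sup>2 * exp (- C * t0))\<bar> \<le> C\<^sup>2"
        proof -
          have "exp (- C * t0) \<le> 1" using C t0 by simp
          then have "C\<^sup>2 * exp (- C * t0) \<le> C\<^sup>2" by (simp add: mult_left_le)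
          moreover have "\<delta> * (C\<^sup>2 * exp (- C * t0)) \<le> C\<^sup>2 * exp (- C * t0)"
            using \<delta> by (simp add: mult_left_le_one_le)
          ultimately show ?thesis using \<delta> by (simp add: abs_mult)
        qed
        moreover have "\<bar>\<gamma>2 t0\<bar> \<le> G2m" using G2m t0i by blast
        ultimately show ?thesis unfolding \<Gamma>2_def
          using abs_triangle_ineq[of "\<gamma>2 t0" "\<delta> * (- C\<^sup>2 * exp (- C * t0))"] by linarith
      qed
      moreover have "0 \<le> \<Gamma>1 t0 * (1 + \<eta>) / t0" using \<Gamma>1t \<eta> t0 by simp
      moreover have "\<Gamma>1 t0 * (1 + \<eta>) / t0 \<le> 2 * (G1m + C) / \<rho>0"
      proof -
        have "\<Gamma>1 t0 \<le> G1m + C"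
        proof -
          have "exp (- C * t0) \<le> 1" using C t0 by simp
          then have "C * exp (- C * t0) \<le> C" using C by (simp add: mult_left_le)
          moreover have "\<delta> * (C * exp (- C * t0)) \<le> C * exp (- C * t0)"
            using \<delta> C by (intro mult_left_le_one_le) auto
          moreover have "\<gamma>1 t0 \<le> G1m"
          proof -
            have "\<bar>\<gamma>1 t0\<bar> \<le> G1m" using G1m(2) t0i(2) by blast
            then show ?thesis by linarith
          qed
          ultimately show ?thesis unfolding \<Gamma>1_def by linarith
        qed
        then have "\<Gamma>1 t0 * (1 + \<eta>) \<le> (G1m + C) * 2" using \<eta> \<Gamma>1t by (intro mult_mono) auto
        moreover have "\<Gamma>1 t0 * (1 + \<eta>) \<ge> 0" using \<eta> \<Gamma>1t by simp
        ultimately have "\<Gamma>1 t0 * (1 + \<eta>) / t0 \<le> (G1m + C) * 2 / t0" using t0 by (simp add: divide_right_mono)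
        also have "\<dots> \<le> (G1m + C) * 2 / \<rho>0" using t0 \<rho>0 G1m C by (intro divide_left_mono) auto
        finally show ?thesis by (simp add: mult.commute)
      qed
      ultimately show ?thesis using \<eta> unfolding b_def K0_def abs_le_iff by linarith
    qed
    have ab: "a + b = \<Gamma>2 t0 + 2 * \<eta> + \<tau>" by (simp add: a_def b_def)
    have ineq: "- (a + b * (e \<bullet> p)\<^sup>2 / (norm p)\<^sup>2) - \<beta> * norm p \<le> k"
      using core inf_lap_Lmat_pos[of p a b e] P by auto
    have margin: "- \<Gamma>2 t0 - \<beta> * \<Gamma>1 t0 \<ge> k + \<delta> * c"
    proof -
      have o: "- \<gamma>2 t0 - \<beta> * \<gamma>1 t0 = k" using ode t0i g1p by force
      have "C * exp (- C * r) \<le> C * (C - \<beta>) * exp (- C * t0)"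
      proof -
        have "C * exp (- C * r) \<le> C * exp (- C * t0)" using E C by simp
        also have "\<dots> \<le> C * exp (- C * t0) * (C - \<beta>)"
        proof -
          have "C * exp (- C * t0) \<ge> 0" using C by simp
          then show ?thesis using mult_left_mono[OF C(2), of "C * exp (- C * t0)"] by simp
        qed
        finally show ?thesis by (simp add: algebra_simps)
      qed
      then have "\<delta> * c \<le> \<delta> * (C * (C - \<beta>) * exp (- C * t0))" unfolding c_def using \<delta> by (intro mult_left_mono) auto
      then show ?thesis using o unfolding \<Gamma>1_def \<Gamma>2_def by (simp add: algebra_simps power2_eq_square)
    qed
    have small: "2 * \<eta> + \<tau> + \<bar>\<beta>\<bar> * (\<tau> * norm v) + K0 * \<delta>\<^sup>2 < \<delta> * c"
    proof -
      have "\<bar>\<beta>\<bar> * (\<tau> * norm v) \<le> \<bar>\<beta>\<bar> * (\<tau> * V)" using tv by (simp add: mult_left_mono)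
      moreover have "\<tau> + \<bar>\<beta>\<bar> * (\<tau> * V) + K0 * \<delta>\<^sup>2 = \<delta>\<^sup>2 * B"
        using V unfolding B_def \<tau>_def by (simp add: field_simps power2_eq_square)
      moreover have "\<delta>\<^sup>2 * B \<le> \<delta> * c / 2"
      proof -
        have "\<delta> * B \<le> c / (2 * B) * B" using \<delta> B by (intro mult_right_mono) auto
        then have "\<delta> * B \<le> c / 2" using B by simp
        then have "\<delta> * (\<delta> * B) \<le> \<delta> * (c / 2)" using \<delta> by (intro mult_left_mono) auto
        then show ?thesis by (simp add: power2_eq_square algebra_simps)
      qed
      moreover have "2 * \<eta> = \<delta> * c / 4" by (simp add: \<eta>_def)
      moreover have "\<delta> * c > 0" using \<delta> c by simp
      ultimately show ?thesis by linarith
    qed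
    show False
      using num_main[OF P pf(1) pf(2) tv0 tvP less_imp_le[OF \<delta>(1)] pf(3) bK ab ineq margin small] .
  qed
  then show ?thesis unfolding f_def K_def \<Lambda>_def .
qed



lemma num_B:
  fixes a b P g1v g2v \<kappa> \<delta> \<beta> k \<tau> V \<eta> \<omega> t1 t0 :: real
  assumes ineq: "- max a (a + b) - \<beta> * P \<le> k"
    and a: "a = g1v * (1 + \<eta>) / t0 + \<eta> + \<tau>" and ab: "a + b = g2v + 2 * \<eta> + \<tau>"
    and k: "k = - \<kappa>" and g2v: "- g2v - \<beta> * g1v = k + \<delta> * \<kappa>"
    and P: "\<bar>P - g1v\<bar> \<le> \<tau> * V" "P \<ge> 0" and tV: "\<tau> * V \<ge> 0"
    and g1: "g1v \<le> (1 - \<delta>) * (\<kappa> + \<omega>) * t0" "g1v \<ge> 0"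
    and t0: "t0 > 0" "t0 \<le> t1" and \<delta>: "0 \<le> \<delta>" "\<delta> \<le> 1" and \<eta>: "\<eta> \<ge> 0" and \<omega>: "\<omega> \<ge> 0"
    and \<kappa>: "\<kappa> > 0"
    and small1: "\<omega> + (\<kappa> + \<omega> + 1) * \<eta> + \<tau> + \<bar>\<beta>\<bar> * ((\<kappa> + \<omega>) * t1) + \<bar>\<beta>\<bar> * (\<tau> * V) < \<delta> * \<kappa>"
    and small2: "2 * \<eta> + \<tau> + \<bar>\<beta>\<bar> * (\<tau> * V) < \<delta> * \<kappa>"
  shows False
proof -
  have bP: "\<beta> * (g1v - P) \<ge> - (\<bar>\<beta>\<bar> * (\<tau> * V))"
  proof -
    have "\<bar>\<beta> * (g1v - P)\<bar> \<le> \<bar>\<beta>\<bar> * (\<tau> * V)" using P by (simp add: abs_mult mult_left_mono abs_minus_commute)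
    then show ?thesis by linarith
  qed
  have 1: "a + b < \<kappa> - \<beta> * P"
  proof -
    have "a + b = \<kappa> - \<delta> * \<kappa> - \<beta> * g1v + 2 * \<eta> + \<tau>" using ab g2v k by linarith
    then show ?thesis using bP small2 by (simp add: algebra_simps)
  qed
  have q: "g1v / t0 \<le> (1 - \<delta>) * (\<kappa> + \<omega>)" using g1 t0 by (simp add: divide_le_eq mult.commute)
  have "g1v * (1 + \<eta>) / t0 = g1v / t0 * (1 + \<eta>)" by simp
  also have "\<dots> \<le> (1 - \<delta>) * (\<kappa> + \<omega>) * (1 + \<eta>)" using q \<eta> by (intro mult_right_mono) auto
  finally have a1: "a \<le> (1 - \<delta>) * (\<kappa> + \<omega>) * (1 + \<eta>) + \<eta> + \<tau>" using a by linarith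
  have a2: "(1 - \<delta>) * (\<kappa> + \<omega>) * (1 + \<eta>) \<le> (1 - \<delta>) * \<kappa> + \<omega> + (\<kappa> + \<omega>) * \<eta>"
  proof -
    have "(1 - \<delta>) * (\<kappa> + \<omega>) * (1 + \<eta>) = (1 - \<delta>) * \<kappa> + (1 - \<delta>) * (\<omega> + (\<kappa> + \<omega>) * \<eta>)"
      by (simp add: algebra_simps)
    also have "(1 - \<delta>) * (\<omega> + (\<kappa> + \<omega>) * \<eta>) \<le> \<omega> + (\<kappa> + \<omega>) * \<eta>"
      using \<delta> \<eta> \<omega> \<kappa> by (intro mult_left_le_one_le) auto
    finally show ?thesis by simp
  qed
  have g1t: "g1v \<le> (\<kappa> + \<omega>) * t1"
  proof -
    have "(1 - \<delta>) * (\<kappa> + \<omega>) * t0 \<le> (\<kappa> + \<omega>) * t0"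
      using \<delta> \<kappa> \<omega> t0 by (simp add: mult_left_le_one_le)
    also have "\<dots> \<le> (\<kappa> + \<omega>) * t1" using t0 \<kappa> \<omega> by (intro mult_left_mono) auto
    finally show ?thesis using g1 by linarith
  qed
  have bP2: "\<beta> * P \<le> \<bar>\<beta>\<bar> * ((\<kappa> + \<omega>) * t1) + \<bar>\<beta>\<bar> * (\<tau> * V)"
  proof -
    have "\<beta> * P \<le> \<bar>\<beta>\<bar> * P" using P by (simp add: mult_right_mono)
    also have "\<dots> \<le> \<bar>\<beta>\<bar> * ((\<kappa> + \<omega>) * t1 + \<tau> * V)" using P g1t by (intro mult_left_mono) auto
    finally show ?thesis by (simp add: algebra_simps)
  qed
  have 2: "a < \<kappa> - \<beta> * P"
    using a1 a2 bP2 small1 by (simp add: algebra_simps)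
  have "max a (a + b) < \<kappa> - \<beta> * P" using 1 2 by simp
  then show False using ineq k by linarith
qed



lemma claim2:
  fixes \<Omega> A :: "'a::euclidean_space set" and \<nu> :: "'a \<Rightarrow> 'a"
    and \<beta> k r :: real and u :: "'a \<Rightarrow> real" and x0 :: 'a
    and \<gamma> \<gamma>1 \<gamma>2 :: "real \<Rightarrow> real"
  assumes bd: "bounded \<Omega>" and op: "open \<Omega>" and conn: "connected \<Omega>"
    and bdry: "C1_boundary_normal \<Omega> \<nu>"
    and GD: "frontier \<Omega> - A \<noteq> {}"
    and GN: "frontier \<Omega> \<inter> A \<noteq> {} \<longrightarrow> convex \<Omega>"
    and sub: "visc_subsol \<Omega> A \<nu> \<beta> k u"
    and r: "r > 0"
    and g1: "\<forall>t\<in>{0..r}. (\<gamma> has_real_derivative \<gamma>1 t) (at t within {0..r})"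
    and g2: "\<forall>t\<in>{0..r}. (\<gamma>1 has_real_derivative \<gamma>2 t) (at t within {0..r})"
    and g2c: "continuous_on {0..r} \<gamma>2"
    and ode: "\<forall>t\<in>{0<..<r}. - \<gamma>2 t - \<beta> * \<bar>\<gamma>1 t\<bar> = k"
    and gpos: "\<forall>t\<in>{0<..<r}. \<gamma>1 t > 0"
    and x0: "x0 \<in> closure \<Omega>" and g10: "\<gamma>1 0 = 0"
  shows "(SUP x\<in>cball x0 r \<inter> closure \<Omega>. u x - \<gamma> (norm (x - x0)))
       = (SUP x\<in>(sphere x0 r \<inter> closure \<Omega>) \<union> (ball x0 r \<inter> (frontier \<Omega> - A)). u x - \<gamma> (norm (x - x0)))"
proof -
  define K where "K = cball x0 r \<inter> closure \<Omega>"
  define \<Lambda> where "\<Lambda> = (sphere x0 r \<inter> closure \<Omega>) \<union> (ball x0 r \<inter> (frontier \<Omega> - A))"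
  define f where "f x = u x - \<gamma> (norm (x - x0))" for x
  have Kc: "compact K" unfolding K_def by (intro compact_Int_closed compact_cball closed_closure)
  have x0K: "x0 \<in> K" using x0 r by (simp add: K_def)
  have c\<gamma>: "continuous_on {0..r} \<gamma>"
    unfolding continuous_on_eq_continuous_within using g1 DERIV_continuous by blast
  have c\<gamma>1: "continuous_on {0..r} \<gamma>1"
    unfolding continuous_on_eq_continuous_within using g2 DERIV_continuous by blast
  have normK: "\<forall>x\<in>K. norm (x - x0) \<in> {0..r}" by (auto simp: K_def dist_norm norm_minus_commute)
  have c\<phi>: "continuous_on K (\<lambda>x. \<gamma> (norm (x - x0)))"
    by (rule continuous_on_compose2[OF c\<gamma>]) (use normK in \<open>auto intro!: continuous_intros\<close>)
  have uscu: "usc_on K u" using sub unfolding visc_subsol_def by (auto intro: usc_on_subset simp: K_def)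
  have uscf: "usc_on K f" unfolding f_def by (rule usc_on_diff_cont[OF uscu c\<phi>])
  obtain xm where xm: "xm \<in> K" "\<forall>x\<in>K. f x \<le> f xm"
    using usc_max[OF Kc, of f] x0K uscf unfolding usc_on_def by blast
  have SK: "\<Lambda> \<subseteq> K" by (auto simp: \<Lambda>_def K_def frontier_def dist_norm)
  have Lne: "\<Lambda> \<noteq> {}" unfolding \<Lambda>_def by (rule Lambda_ne[OF conn GD x0 r])
  note of = ode_facts[OF r g2 g2c ode gpos g10]
  define \<kappa> where "\<kappa> = - k"
  have \<kappa>: "\<kappa> > 0" using of(1) by (simp add: \<kappa>_def)
  have g20: "\<gamma>2 0 = \<kappa>" using of(2) by (simp add: \<kappa>_def)
  obtain cg where cg: "cg > 0" "\<forall>t\<in>{0..r}. \<gamma>1 t \<ge> cg * t" using of(3) by blast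
  have "(SUP x\<in>K. f x) = (SUP x\<in>\<Lambda>. f x)"
  proof (rule sup_eq_max[OF SK Lne xm])
    fix m assume mS: "\<forall>x\<in>\<Lambda>. f x \<le> m" and mM: "m < f xm"
    define \<Delta> where "\<Delta> = f xm - m"
    have \<Delta>: "\<Delta> > 0" using mM by (simp add: \<Delta>_def)
    have "\<Omega> \<noteq> {}" using GD by auto
    then obtain z where z: "z \<in> \<Omega>" by blast
    obtain B0 where B0: "B0 > 0" "\<forall>x\<in>closure \<Omega>. norm x \<le> B0"
      using bounded_closure[OF bd] unfolding bounded_pos by blast
    define V where "V = B0 + norm z + 1"
    have V: "V > 0" "\<forall>x\<in>closure \<Omega>. norm (x - z) \<le> V"
    proof -
      show "V > 0" using B0 by (simp add: V_def add_pos_nonneg)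
      show "\<forall>x\<in>closure \<Omega>. norm (x - z) \<le> V"
      proof
        fix x assume "x \<in> closure \<Omega>"
        then have "norm x \<le> B0" using B0 by blast
        moreover have "norm (x - z) \<le> norm x + norm z" by (rule norm_triangle_ineq4)
        ultimately show "norm (x - z) \<le> V" by (simp add: V_def)
      qed
    qed
    obtain G0m where G0m: "G0m > 0" "\<forall>t\<in>{0..r}. \<bar>\<gamma> t\<bar> \<le> G0m" using cont_bound[OF c\<gamma>] by blast
    obtain G1m where G1m: "G1m > 0" "\<forall>t\<in>{0..r}. \<bar>\<gamma>1 t\<bar> \<le> G1m" using cont_bound[OF c\<gamma>1] by blast
    obtain G2m where G2m: "G2m > 0" "\<forall>t\<in>{0..r}. \<bar>\<gamma>2 t\<bar> \<le> G2m" using cont_bound[OF g2c] by blast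
    obtain Q where Q: "Q = G0m + V\<^sup>2" by blast
    define \<delta> where "\<delta> = min (1 / 2) (\<Delta> / (8 * Q))"
    have GV: "Q > 0" using G0m Q by (simp add: add_pos_nonneg)
    have \<delta>: "\<delta> > 0" "\<delta> \<le> 1 / 2" "\<delta> \<le> \<Delta> / (8 * Q)"
    proof -
      have "\<Delta> / (8 * Q) > 0" using \<Delta> GV by simp
      then show "\<delta> > 0" by (simp add: \<delta>_def)
      show "\<delta> \<le> 1 / 2" "\<delta> \<le> \<Delta> / (8 * Q)" unfolding \<delta>_def by (simp_all only: min.cobounded1 min.cobounded2)
    qed
    define \<mu> where "\<mu> = \<delta> * \<kappa>"
    have \<mu>: "\<mu> > 0" using \<delta> \<kappa> by (simp add: \<mu>_def)
    define \<omega> where "\<omega> = \<mu> / 16"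
    have \<omega>: "\<omega> > 0" using \<mu> by (simp add: \<omega>_def)
    obtain t1' where t1': "t1' > 0" "\<forall>s\<in>{0..r}. dist s 0 < t1' \<longrightarrow> dist (\<gamma>2 s) (\<gamma>2 0) < \<omega>"
      using g2c \<omega> r unfolding continuous_on_iff by (metis atLeastAtMost_iff order.refl less_imp_le)
    define Y where "Y = (\<bar>\<beta>\<bar> + 1) * (\<kappa> + \<omega>)"
    have Y: "Y > 0" using \<kappa> \<omega> by (simp add: Y_def add_pos_pos)
    define t1 where "t1 = min (t1' / 2) (min (r / 2) (\<mu> / (16 * Y)))"
    have t1: "t1 > 0" "t1 < t1'" "t1 < r" "\<bar>\<beta>\<bar> * ((\<kappa> + \<omega>) * t1) \<le> \<mu> / 16"
    proof -
      have q: "\<mu> / (16 * Y) > 0" using \<mu> Y by simp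
      then show "t1 > 0" using t1' r by (simp add: t1_def)
      show "t1 < t1'" "t1 < r" using t1' r by (auto simp: t1_def)
      have "t1 \<le> \<mu> / (16 * Y)" by (simp add: t1_def)
      then have "Y * t1 \<le> Y * (\<mu> / (16 * Y))" using Y by (intro mult_left_mono) auto
      also have "\<dots> = \<mu> / 16" using Y by simp
      finally have "(\<bar>\<beta>\<bar> + 1) * ((\<kappa> + \<omega>) * t1) \<le> \<mu> / 16" by (simp add: Y_def algebra_simps)
      moreover have "\<bar>\<beta>\<bar> * ((\<kappa> + \<omega>) * t1) \<le> (\<bar>\<beta>\<bar> + 1) * ((\<kappa> + \<omega>) * t1)"
        using \<kappa> \<omega> \<open>t1 > 0\<close> by (intro mult_right_mono) auto
      ultimately show "\<bar>\<beta>\<bar> * ((\<kappa> + \<omega>) * t1) \<le> \<mu> / 16" by linarith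
    qed
    have g1up: "\<gamma>1 t \<le> (\<kappa> + \<omega>) * t" if t: "0 \<le> t" "t \<le> t1" for t
    proof -
      define F where "F s = (\<kappa> + \<omega>) * s - \<gamma>1 s" for s
      have dF: "\<forall>s\<in>{0..r}. (F has_real_derivative (\<kappa> + \<omega>) - \<gamma>2 s) (at s within {0..r})"
        using g2 unfolding F_def by (auto intro!: derivative_eq_intros)
      have "F 0 \<le> F t"
      proof (rule incr_within[OF _ _ _ dF])
        show "\<forall>x. 0 < x \<and> x < t \<longrightarrow> 0 \<le> \<kappa> + \<omega> - \<gamma>2 x"
        proof (intro allI impI)
          fix x assume x: "0 < x \<and> x < t"
          then have "x \<in> {0..r}" "dist x 0 < t1'" using t t1 by (auto simp: dist_real_def)
          then have "dist (\<gamma>2 x) (\<gamma>2 0) < \<omega>" using t1' by blast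
          then show "0 \<le> \<kappa> + \<omega> - \<gamma>2 x" using g20 by (simp add: dist_real_def)
        qed
      qed (use t t1 in auto)
      then show ?thesis by (simp add: F_def g10)
    qed
    define K2 where "K2 = G2m + 3 + 2 * G1m / t1"
    have K2: "K2 > 0" using G2m G1m t1 by (simp add: K2_def add_pos_nonneg)
    define X where "X = \<kappa> + \<omega> + 2"
    have X: "X > 0" "X \<ge> 1" "\<kappa> \<le> X" "\<kappa> + \<omega> + 1 \<le> X" using \<kappa> \<omega> by (auto simp: X_def)
    define \<eta> where "\<eta> = \<mu> / (16 * X)"
    have \<mu>\<kappa>: "\<mu> \<le> \<kappa>" using \<delta> \<kappa> unfolding \<mu>_def by (simp add: mult_left_le_one_le)
    have \<eta>: "\<eta> > 0" "\<eta> \<le> 1" "(\<kappa> + \<omega> + 1) * \<eta> \<le> \<mu> / 16" "2 * \<eta> \<le> \<mu> / 8"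
    proof -
      show "\<eta> > 0" using \<mu> X by (simp add: \<eta>_def)
      have "X * \<eta> = \<mu> / 16" using X by (simp add: \<eta>_def)
      moreover have "(\<kappa> + \<omega> + 1) * \<eta> \<le> X * \<eta>" using X \<open>\<eta> > 0\<close> by (intro mult_right_mono) auto
      ultimately show "(\<kappa> + \<omega> + 1) * \<eta> \<le> \<mu> / 16" by simp
      have "1 * \<eta> \<le> X * \<eta>" using X \<open>\<eta> > 0\<close> by (intro mult_right_mono) auto
      then have "\<eta> \<le> \<mu> / 16" using \<open>X * \<eta> = \<mu> / 16\<close> by simp
      then show "2 * \<eta> \<le> \<mu> / 8" by simp
      have "(16 * \<eta>) * X \<le> 1 * X" using \<open>X * \<eta> = \<mu> / 16\<close> \<mu>\<kappa> X by (simp add: algebra_simps)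
      then have "16 * \<eta> \<le> 1" using X by (meson mult_le_cancel_right_pos)
      then show "\<eta> \<le> 1" by simp
    qed
    obtain Z where Z: "Z = 1 + \<bar>\<beta>\<bar> * V" by blast
    define \<tau> where "\<tau> = min (min \<delta> (\<mu> / (16 * Z))) (min (cg * t1 / (4 * V)) (\<mu> * cg * t1 / (16 * K2 * V)))"
    have BV: "1 + \<bar>\<beta>\<bar> * V > 0" using V by (simp add: add_pos_nonneg)
    have \<tau>: "\<tau> > 0" "\<tau> \<le> \<delta>" "\<tau> * (1 + \<bar>\<beta>\<bar> * V) \<le> \<mu> / 16" "\<tau> * V \<le> cg * t1 / 4"
      "\<tau> * V \<le> \<mu> * cg * t1 / (16 * K2)"
    proof -
      have "\<mu> / (16 * Z) > 0" "cg * t1 / (4 * V) > 0" "\<mu> * cg * t1 / (16 * K2 * V) > 0"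
        using \<mu> BV cg t1 V K2 Z by auto
      then show "\<tau> > 0" using \<delta> by (simp add: \<tau>_def)
      show "\<tau> \<le> \<delta>" by (simp add: \<tau>_def)
      have "\<tau> \<le> \<mu> / (16 * Z)" by (simp add: \<tau>_def)
      then have "\<tau> * Z \<le> \<mu> / (16 * Z) * Z"
        using BV Z by (intro mult_right_mono) auto
      moreover have "\<mu> / (16 * Z) * Z = \<mu> / 16" using BV[folded Z] by simp
      ultimately have "\<tau> * Z \<le> \<mu> / 16" by linarith
      then show "\<tau> * (1 + \<bar>\<beta>\<bar> * V) \<le> \<mu> / 16" using Z by simp
      have "\<tau> \<le> cg * t1 / (4 * V)" by (simp add: \<tau>_def)
      then have "\<tau> * V \<le> cg * t1 / (4 * V) * V" using V by (intro mult_right_mono) auto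
      then show "\<tau> * V \<le> cg * t1 / 4" using V by simp
      have "\<tau> \<le> \<mu> * cg * t1 / (16 * K2 * V)" by (simp add: \<tau>_def)
      then have "\<tau> * V \<le> \<mu> * cg * t1 / (16 * K2 * V) * V" using V by (intro mult_right_mono) auto
      then show "\<tau> * V \<le> \<mu> * cg * t1 / (16 * K2)" using V by simp
    qed
    define \<Gamma> where "\<Gamma> t = (1 - \<delta>) * \<gamma> t" for t
    define \<Gamma>1 where "\<Gamma>1 t = (1 - \<delta>) * \<gamma>1 t" for t
    define \<Gamma>2 where "\<Gamma>2 t = (1 - \<delta>) * \<gamma>2 t" for t
    have d\<Gamma>: "\<forall>t\<in>{0..r}. (\<Gamma> has_real_derivative \<Gamma>1 t) (at t within {0..r})"
      using g1 unfolding \<Gamma>_def \<Gamma>1_def by (auto intro!: derivative_eq_intros)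
    have d\<Gamma>1: "\<forall>t\<in>{0..r}. (\<Gamma>1 has_real_derivative \<Gamma>2 t) (at t within {0..r})"
      using g2 unfolding \<Gamma>1_def \<Gamma>2_def by (auto intro!: derivative_eq_intros)
    have c\<Gamma>2: "continuous_on {0..r} \<Gamma>2" unfolding \<Gamma>2_def by (intro continuous_intros g2c)
    define \<Psi> where "\<Psi> x = - \<delta> * \<gamma> (norm (x - x0)) + \<tau> / 2 * (norm (x - z))\<^sup>2" for x
    have c\<Psi>: "continuous_on K \<Psi>" unfolding \<Psi>_def by (intro continuous_intros c\<phi>)
    define W where "W = \<delta> * Q"
    have \<Psi>W: "\<forall>x\<in>K. \<bar>\<Psi> x\<bar> \<le> W"
    proof
      fix x assume x: "x \<in> K"
      have "\<bar>\<gamma> (norm (x - x0))\<bar> \<le> G0m" using G0m normK x by blast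
      then have 1: "\<bar>- \<delta> * \<gamma> (norm (x - x0))\<bar> \<le> \<delta> * G0m" using \<delta> by (simp add: abs_mult mult_left_mono)
      have "norm (x - z) \<le> V" using V x by (auto simp: K_def)
      then have n2: "(norm (x - z))\<^sup>2 \<le> V\<^sup>2" by (simp add: power_mono)
      have "\<tau> / 2 * (norm (x - z))\<^sup>2 \<le> \<delta> * V\<^sup>2"
      proof -
        have "\<tau> / 2 * (norm (x - z))\<^sup>2 \<le> \<delta> * (norm (x - z))\<^sup>2" using \<tau> by (intro mult_right_mono) auto
        also have "\<dots> \<le> \<delta> * V\<^sup>2" using n2 \<delta> by (intro mult_left_mono) auto
        finally show ?thesis .
      qed
      moreover have "\<tau> / 2 * (norm (x - z))\<^sup>2 \<ge> 0" using \<tau> by simp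
      ultimately show "\<bar>\<Psi> x\<bar> \<le> W" using 1 unfolding \<Psi>_def W_def Q by (simp add: algebra_simps abs_le_iff) 
    qed
    have W: "2 * W \<le> \<Delta> / 4"
    proof -
      have "W \<le> \<Delta> / (8 * Q) * Q" unfolding W_def using \<delta> GV by (intro mult_right_mono) auto
      also have "\<dots> = \<Delta> / 8" using GV by simp
      finally show ?thesis by simp
    qed
    obtain y where y: "y \<in> K" "\<forall>x\<in>K. f x - \<Psi> x \<le> f y - \<Psi> y" "f y \<ge> f xm - 2 * W"
      using perturb_max[OF Kc xm uscf c\<Psi> \<Psi>W] by blast
    have fy: "f y > m + \<Delta> / 2" using y(3) W \<Delta> unfolding \<Delta>_def by argo
    have ynL: "y \<notin> \<Lambda>"
    proof
      assume "y \<in> \<Lambda>"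
      then have "f y \<le> m" using mS by blast
      then show False using fy \<Delta> by argo
    qed
    have yr: "norm (y - x0) < r" and y\<Omega>: "y \<in> \<Omega> \<union> (frontier \<Omega> \<inter> A)"
      using locate[OF op y(1)[unfolded K_def] ynL[unfolded \<Lambda>_def]] by auto
    have eqF: "f x - \<Psi> x = u x - (\<Gamma> (norm (x - x0)) + \<tau> / 2 * (norm (x - z))\<^sup>2)" for x
      by (simp add: f_def \<Psi>_def \<Gamma>_def algebra_simps)
    have lm: "\<exists>e>0. \<forall>x\<in>closure \<Omega> \<inter> ball y e.
       u x - (\<Gamma> (norm (x - x0)) + \<tau> / 2 * (norm (x - z))\<^sup>2) \<le> u y - (\<Gamma> (norm (y - x0)) + \<tau> / 2 * (norm (y - z))\<^sup>2)"
      using loc_max[of y x0 r \<Omega> "\<lambda>x. f x - \<Psi> x"] y(1,2) yr unfolding K_def eqF by blast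
    have tvb: "\<tau> + \<bar>\<beta>\<bar> * (\<tau> * V) \<le> \<mu> / 16" using \<tau>(3) by (simp add: algebra_simps)
    show False
    proof (cases "y = x0")
      case True
      obtain e0 :: 'a where e0: "e0 \<in> Basis" using nonempty_Basis by blast
      have G10: "\<Gamma>1 0 = 0" by (simp add: \<Gamma>1_def g10)
      have core: "- inf_lap_plus (\<tau> *\<^sub>R (x0 - z)) (Lmat (\<Gamma>2 0 + \<eta> + \<tau>) 0 e0) - \<beta> * norm (\<tau> *\<^sub>R (x0 - z)) \<le> k"
        using core_at[OF sub bdry op GN z \<tau>(1) r d\<Gamma> d\<Gamma>1 c\<Gamma>2 G10 y\<Omega>[unfolded True] \<eta>(1) lm[unfolded True]] .
      have "inf_lap_plus (\<tau> *\<^sub>R (x0 - z)) (Lmat (\<Gamma>2 0 + \<eta> + \<tau>) 0 e0) \<le> max (\<Gamma>2 0 + \<eta> + \<tau>) (\<Gamma>2 0 + \<eta> + \<tau> + 0)"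
        by (rule inf_lap_Lmat_le) (use e0 in simp)
      then have il: "inf_lap_plus (\<tau> *\<^sub>R (x0 - z)) (Lmat (\<Gamma>2 0 + \<eta> + \<tau>) 0 e0) \<le> \<Gamma>2 0 + \<eta> + \<tau>" by simp
      have "norm (x0 - z) \<le> V" using V x0 by blast
      then have "\<beta> * norm (\<tau> *\<^sub>R (x0 - z)) \<le> \<bar>\<beta>\<bar> * (\<tau> * V)"
      proof -
        assume n: "norm (x0 - z) \<le> V"
        have "\<beta> * norm (\<tau> *\<^sub>R (x0 - z)) \<le> \<bar>\<beta>\<bar> * norm (\<tau> *\<^sub>R (x0 - z))" by (simp add: mult_right_mono)
        also have "\<dots> \<le> \<bar>\<beta>\<bar> * (\<tau> * V)" using n \<tau> by (intro mult_left_mono) (auto intro: mult_left_mono)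
        finally show ?thesis .
      qed
      moreover have "\<Gamma>2 0 = \<kappa> - \<mu>" by (simp add: \<Gamma>2_def g20 \<mu>_def algebra_simps)
      ultimately have "\<mu> \<le> \<eta> + (\<tau> + \<bar>\<beta>\<bar> * (\<tau> * V))" using core il \<kappa>_def by linarith
      then show False using tvb \<eta> \<mu> by linarith
    next
      case False
      define t0 where "t0 = norm (y - x0)"
      define e where "e = (y - x0) /\<^sub>R norm (y - x0)"
      define v where "v = y - z"
      define p where "p = \<Gamma>1 t0 *\<^sub>R e + \<tau> *\<^sub>R v"
      define a where "a = \<Gamma>1 t0 * (1 + \<eta>) / t0 + \<eta> + \<tau>"
      define b where "b = \<Gamma>2 t0 + 2 * \<eta> - (\<Gamma>1 t0 * (1 + \<eta>) / t0 + \<eta>)"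
      have t0: "0 < t0" "t0 < r" using False yr by (auto simp: t0_def)
      have t0i: "t0 \<in> {0<..<r}" "t0 \<in> {0..r}" using t0 by auto
      have g1p: "\<gamma>1 t0 > 0" using gpos t0i by blast
      have \<Gamma>1t: "\<Gamma>1 t0 \<ge> 0" using g1p \<delta> by (simp add: \<Gamma>1_def)
      have core: "- inf_lap_plus p (Lmat a b e) - \<beta> * norm p \<le> k"
        using core_off[OF sub bdry op GN x0 z \<tau>(1) d\<Gamma> d\<Gamma>1 c\<Gamma>2 y\<Omega> t0(1)[unfolded t0_def] yr
            \<Gamma>1t[unfolded t0_def] \<eta>(1,2) lm]
        unfolding p_def a_def b_def t0_def e_def v_def by simp
      have e1: "norm e = 1" using t0 by (simp add: e_def t0_def)
      note pf = p_facts[OF e1 \<Gamma>1t less_imp_le[OF \<tau>(1)], of v, folded p_def]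
      have vV: "norm v \<le> V" using V y(1) by (auto simp: v_def K_def)
      have tv: "\<tau> * norm v \<le> \<tau> * V" using vV \<tau> by (simp add: mult_left_mono)
      have tv0: "\<tau> * norm v \<ge> 0" using \<tau> by simp
      have margin: "- \<Gamma>2 t0 - \<beta> * \<Gamma>1 t0 = k + \<delta> * \<kappa>"
      proof -
        have o: "\<gamma>2 t0 + \<beta> * \<gamma>1 t0 = - k" using ode t0i g1p by force
        have "- \<Gamma>2 t0 - \<beta> * \<Gamma>1 t0 = - (1 - \<delta>) * (\<gamma>2 t0 + \<beta> * \<gamma>1 t0)"
          unfolding \<Gamma>1_def \<Gamma>2_def by (simp add: algebra_simps)
        also have "\<dots> = k + \<delta> * \<kappa>" unfolding o \<kappa>_def by (simp add: algebra_simps)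
        finally show ?thesis .
      qed
      have ab: "a + b = \<Gamma>2 t0 + 2 * \<eta> + \<tau>" by (simp add: a_def b_def)
      show False
      proof (cases "t0 \<le> t1")
        case True
        have "inf_lap_plus p (Lmat a b e) \<le> max a (a + b)" by (rule inf_lap_Lmat_le[OF e1])
        then have ineq: "- max a (a + b) - \<beta> * norm p \<le> k" using core by linarith
        have g1b: "\<Gamma>1 t0 \<le> (1 - \<delta>) * (\<kappa> + \<omega>) * t0"
          using g1up[of t0] True t0 \<delta> unfolding \<Gamma>1_def by (simp add: mult_left_mono mult.assoc)
        have s1: "\<omega> + (\<kappa> + \<omega> + 1) * \<eta> + \<tau> + \<bar>\<beta>\<bar> * ((\<kappa> + \<omega>) * t1) + \<bar>\<beta>\<bar> * (\<tau> * norm v) < \<delta> * \<kappa>"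
        proof -
          have "\<bar>\<beta>\<bar> * (\<tau> * norm v) \<le> \<bar>\<beta>\<bar> * (\<tau> * V)" using tv by (simp add: mult_left_mono)
          then show ?thesis using \<eta>(3) t1(4) tvb \<mu> unfolding \<omega>_def \<mu>_def by linarith
        qed
        have s2: "2 * \<eta> + \<tau> + \<bar>\<beta>\<bar> * (\<tau> * norm v) < \<delta> * \<kappa>"
        proof -
          have "\<bar>\<beta>\<bar> * (\<tau> * norm v) \<le> \<bar>\<beta>\<bar> * (\<tau> * V)" using tv by (simp add: mult_left_mono)
          then show ?thesis using \<eta>(4) tvb \<mu> unfolding \<mu>_def by linarith
        qed
        have kk: "k = - \<kappa>" by (simp add: \<kappa>_def)
        show False
          by (rule num_B[OF ineq a_def ab kk margin pf(3) norm_ge_zero tv0 g1b \<Gamma>1t t0(1) True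
              less_imp_le[OF \<delta>(1)] _ less_imp_le[OF \<eta>(1)] less_imp_le[OF \<omega>] \<kappa> s1 s2]) (use \<delta> in simp)
      next
        case False
        define d' where "d' = 4 * (\<tau> * V) / (cg * t1)"
        have ct: "cg * t1 > 0" using cg t1 by simp
        have \<Gamma>1lb: "\<Gamma>1 t0 \<ge> cg * t1 / 2"
        proof -
          have "cg * t1 \<le> cg * t0" using False cg by simp
          also have "\<dots> \<le> \<gamma>1 t0" using cg t0i by blast
          finally have "cg * t1 / 2 \<le> \<gamma>1 t0 / 2" by simp
          also have "\<dots> \<le> (1 - \<delta>) * \<gamma>1 t0" using \<delta> g1p by (simp add: mult_right_mono)
          finally show ?thesis by (simp add: \<Gamma>1_def)
        qed
        have Plb: "norm p \<ge> cg * t1 / 4" using pf(3) \<Gamma>1lb tv \<tau>(4) by linarith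
        have P: "norm p > 0" using Plb ct by linarith
        have d'0: "d' \<ge> 0" using \<tau> V ct by (simp add: d'_def)
        have tvP: "\<tau> * norm v \<le> d' * norm p"
        proof -
          have "d' * (cg * t1 / 4) = \<tau> * V" using cg(1) t1(1) by (simp add: d'_def)
          moreover have "d' * (cg * t1 / 4) \<le> d' * norm p" using Plb d'0 by (intro mult_left_mono) auto
          ultimately show ?thesis using tv by linarith
        qed
        have bK: "\<bar>b\<bar> \<le> K2"
        proof -
          have "\<bar>\<Gamma>2 t0\<bar> \<le> G2m"
          proof -
            have "\<bar>\<gamma>2 t0\<bar> \<le> G2m" using G2m t0i by blast
            moreover have "\<bar>\<Gamma>2 t0\<bar> \<le> \<bar>\<gamma>2 t0\<bar>" using \<delta> by (simp add: \<Gamma>2_def abs_mult mult_left_le_one_le)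
            ultimately show ?thesis by linarith
          qed
          moreover have "0 \<le> \<Gamma>1 t0 * (1 + \<eta>) / t0" using \<Gamma>1t \<eta> t0 by simp
          moreover have "\<Gamma>1 t0 * (1 + \<eta>) / t0 \<le> 2 * G1m / t1"
          proof -
            have "\<Gamma>1 t0 \<le> G1m"
            proof -
              have "\<bar>\<gamma>1 t0\<bar> \<le> G1m" using G1m t0i by blast
              moreover have "\<Gamma>1 t0 \<le> \<gamma>1 t0" using \<delta> g1p by (simp add: \<Gamma>1_def mult_left_le_one_le)
              ultimately show ?thesis by linarith
            qed
            then have "\<Gamma>1 t0 * (1 + \<eta>) \<le> G1m * 2" using \<eta> \<Gamma>1t by (intro mult_mono) auto
            moreover have "\<Gamma>1 t0 * (1 + \<eta>) \<ge> 0" using \<eta> \<Gamma>1t by simp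
            ultimately have "\<Gamma>1 t0 * (1 + \<eta>) / t0 \<le> G1m * 2 / t0" using t0 by (simp add: divide_right_mono)
            also have "\<dots> \<le> G1m * 2 / t1" using False t1 G1m by (intro divide_left_mono) auto
            finally show ?thesis by (simp add: mult.commute)
          qed
          ultimately show ?thesis using \<eta> unfolding b_def K2_def abs_le_iff by linarith
        qed
        have ineq: "- (a + b * (e \<bullet> p)\<^sup>2 / (norm p)\<^sup>2) - \<beta> * norm p \<le> k"
          using core inf_lap_Lmat_pos[of p a b e] P by auto
        have small: "2 * \<eta> + \<tau> + \<bar>\<beta>\<bar> * (\<tau> * norm v) + K2 * d'\<^sup>2 < \<delta> * \<kappa>"
        proof -
          have d'1: "d' \<le> 1" using \<tau>(4) ct by (simp add: d'_def divide_le_eq)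
          have "K2 * d' \<le> \<mu> / 4"
          proof -
            have "K2 * d' = 4 * K2 * (\<tau> * V) / (cg * t1)" by (simp add: d'_def)
            also have "\<dots> \<le> 4 * K2 * (\<mu> * cg * t1 / (16 * K2)) / (cg * t1)"
              using \<tau>(5) K2 ct by (intro divide_right_mono mult_left_mono) auto
            also have "\<dots> = \<mu> / 4" using K2 cg(1) t1(1) by (simp add: field_simps)
            finally show ?thesis .
          qed
          moreover have "K2 * d'\<^sup>2 \<le> K2 * d'"
          proof -
            have "d'\<^sup>2 \<le> d'" using d'0 d'1 by (simp add: power2_eq_square mult_left_le_one_le)
            then show ?thesis using K2 by (simp add: mult_left_mono)
          qed
          moreover have "\<bar>\<beta>\<bar> * (\<tau> * norm v) \<le> \<bar>\<beta>\<bar> * (\<tau> * V)" using tv by (simp add: mult_left_mono)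
          ultimately show ?thesis using \<eta>(4) tvb \<mu> unfolding \<mu>_def by linarith
        qed
        have margin': "- \<Gamma>2 t0 - \<beta> * \<Gamma>1 t0 \<ge> k + \<delta> * \<kappa>" using margin by simp
        show False
          using num_main[OF P pf(1) pf(2) tv0 tvP d'0 pf(3) bK ab ineq margin' small] .
      qed
    qed
  qed
  then show ?thesis unfolding f_def K_def \<Lambda>_def .
qed


theorem lemma3p1:
  fixes \<Omega> A :: "'a::euclidean_space set" and \<nu> :: "'a \<Rightarrow> 'a"
    and \<beta> k r :: real and u :: "'a \<Rightarrow> real" and x0 :: 'a
    and \<gamma> \<gamma>1 \<gamma>2 :: "real \<Rightarrow> real"
  assumes \<Omega>: "bounded \<Omega>" "open \<Omega>" "connected \<Omega>"
    and bdry: "C1_boundary_normal \<Omega> \<nu>"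
    and A: "open A"
    and GD: "frontier \<Omega> - A \<noteq> {}"
    and GN: "frontier \<Omega> \<inter> A \<noteq> {} \<longrightarrow> convex \<Omega>"
    and sub: "visc_subsol \<Omega> A \<nu> \<beta> k u"
    and r: "r > 0"
    and g1: "\<forall>t\<in>{0..r}. (\<gamma> has_real_derivative \<gamma>1 t) (at t within {0..r})"
    and g2: "\<forall>t\<in>{0..r}. (\<gamma>1 has_real_derivative \<gamma>2 t) (at t within {0..r})"
    and g2c: "continuous_on {0..r} \<gamma>2"
    and ode: "\<forall>t\<in>{0<..<r}. - \<gamma>2 t - \<beta> * \<bar>\<gamma>1 t\<bar> = k"
    and gpos: "\<forall>t\<in>{0<..<r}. \<gamma>1 t > 0"
    and x0: "x0 \<in> closure \<Omega>"
  defines "\<phi> \<equiv> (\<lambda>x. \<gamma> (norm (x - x0)))"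
    and "\<Lambda> \<equiv> (sphere x0 r \<inter> closure \<Omega>) \<union> (ball x0 r \<inter> (frontier \<Omega> - A))"
  shows "(SUP x\<in>cball x0 r \<inter> closure \<Omega>. u x - \<phi> x) = (SUP x\<in>\<Lambda> \<union> {x0}. u x - \<phi> x)
       \<and> (\<gamma>1 0 = 0 \<longrightarrow>
         (SUP x\<in>cball x0 r \<inter> closure \<Omega>. u x - \<phi> x) = (SUP x\<in>\<Lambda>. u x - \<phi> x))"
  proof -
  have A: "(SUP x\<in>cball x0 r \<inter> closure \<Omega>. u x - \<gamma> (norm (x - x0)))
       = (SUP x\<in>((sphere x0 r \<inter> closure \<Omega>) \<union> (ball x0 r \<inter> (frontier \<Omega> - A))) \<union> {x0}. u x - \<gamma> (norm (x - x0)))"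
    by (rule claim1[OF \<Omega>(1) \<Omega>(2) bdry GD GN sub r g1 g2 g2c ode gpos x0])
  have B: "\<gamma>1 0 = 0 \<longrightarrow> (SUP x\<in>cball x0 r \<inter> closure \<Omega>. u x - \<gamma> (norm (x - x0)))
       = (SUP x\<in>(sphere x0 r \<inter> closure \<Omega>) \<union> (ball x0 r \<inter> (frontier \<Omega> - A)). u x - \<gamma> (norm (x - x0)))"
    using claim2[OF \<Omega>(1) \<Omega>(2) \<Omega>(3) bdry GD GN sub r g1 g2 g2c ode gpos x0] by blast
  show ?thesis unfolding \<phi>_def \<Lambda>_def using A B by blast
qed

end
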